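(* Assume (H1)–(H4) and the data and construction below (with $d_1,b,M,d_2$ admissible). Then for every $z\in\mathbb R^N$ and $t_2>t_1>0$: (1) $u(t_2+t,x;u^-_{0,z,t_2},z)\ge u(t_1+t,x;u^-_{0,z,t_1},z)$ for all $t>-t_1$, $x\in\mathbb R^N$; (2) $u(t_2+t,x;u^+_{0,z,t_2},z)\le u(t_1+t,x;u^+_{0,z,t_1},z)$ for all $t>-t_1$, $x\in\mathbb R^N$.
   Context: Setting: $N\ge1$, $S^{N-1}$ unit sphere, $e_i$ standard basis vectors. $k\in C^1(\mathbb R^N)$, $k(z)>0$ for $\|z\|<\delta_0$, $k(z)=0$ for $\|z\|\ge\delta_0$ (some $\delta_0>0$), $\int k=1$. $f:\mathbb R^N\times\mathbb R\to\mathbb R$ with $f(x+p_ie_i,u)=f(x,u)$ for given periods $p_i>0$. $(E_z)$: $\partial_tu=\int_{\mathbb R^N}k(y-x)u(t,y)dy-u(t,x)+u(t,x)f(x+z,u(t,x))$; for bounded measurable $u_0$, $u(t,x;u_0,z)$ is the solution of $(E_z)$ with $u(0,\cdot)=u_0$. $X_p$: continuous $p$-periodic functions with sup norm, $X_p^+$ nonnegative ones; $a_0(x)=f(x,0)$; $(\mathcal K_{\xi,\mu}v)(x)=\int e^{-\mu(y-x)\cdot\xi}k(y-x)v(y)dy$, $\mathcal K=\mathcal K_{\xi,0}$; $\lambda_0(\xi,\mu,a_0)=\sup\{\mathrm{Re}\lambda:\lambda\in\sigma(\mathcal K_{\xi,\mu}-I+a_0I)\}$ on $X_p$; $\lambda_0=\lambda_0(\xi,0,a_0)$.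 Principal eigenvalue: algebraically simple eigenvalue with eigenfunction in $X_p^+$, rest of spectrum has smaller real part. (H1) $f\in C^1(\mathbb R^N\times[0,\infty))$, $\sup_{x,u\ge0}\partial_uf<0$, $f(x,u)<0$ for $u$ large. (H2) $\lambda_0>0$. (H3) for all $\xi\in S^{N-1}$, $\mu\ge0$, $\lambda_0(\xi,\mu,a_0)$ is the principal eigenvalue of $\mathcal K_{\xi,\mu}-I+a_0I$. (H4) $f(x,u)=f(x,0)$ for $u\le0$. Known: $(E_0)$ has a unique stationary solution $u^+\in X_p^+\setminus\{0\}$; for each $\xi$ there is $\mu^*(\xi)>0$ with $c^*(\xi):=\inf_{\mu>0}\lambda_0(\xi,\mu,a_0)/\mu=\lambda_0(\xi,\mu^*(\xi),a_0)/\mu^*(\xi)<\lambda_0(\xi,\mu,a_0)/\mu$ for $\mu\in(0,\mu^*(\xi))$. Data: fix $\xi\in S^{N-1}$, $c>c^*(\xi)$, $\mu\in(0,\mu^*(\xi))$ with $\lambda_0(\xi,\mu,a_0)=c\mu$, and $\mu_1\in(\mu,\min\{2\mu,\mu^*(\xi)\})$ with $c^*(\xi)<\lambda_0(\xi,\mu_1,a_0)/\mu_1<c$. $\phi,\phi_1,\phi_0\in X_p^+$ positive principal eigenfunctions of $\mathcal K_{\xi,\mu}-I+a_0I$, $\mathcal K_{\xi,\mu_1}-I+a_0I$, $\mathcal K-I+a_0I$, each with sup $1$. Construction: for $d_1>0$, $z$, $T$, put $w_{z,T}(x)=e^{-\mu(x\cdot\xi+cT)}\phi(x+z)-d_1e^{-\mu_1(x\cdot\xi+cT)}\phi_1(x+z)$.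 Admissibility: $d_1$ is large enough that $(t,x)\mapsto w_{z,T-t}(x)$ satisfies the sub-solution inequality $\partial_tv\le\int k(y-x)v(t,y)dy-v+f(x+z,v)v$ pointwise for all $z,T$; $b>0$ is small enough that $b\phi_0(\cdot+z)$ satisfies $\int k(y-x)b\phi_0(y+z)dy-b\phi_0(x+z)+f(x+z,b\phi_0(x+z))b\phi_0(x+z)\ge0$ for all $x,z$; $M>0$ is such that $w_{z,T}(x)\ge b$ whenever $M-2\delta_0\le x\cdot\xi+cT\le M$; $d_2\ge0$. Define $u^-_{0,z,T}(x)=\max\{b\phi_0(x+z),w_{z,T}(x)\}$ if $x\cdot\xi+cT<M$ and $u^-_{0,z,T}(x)=w_{z,T}(x)$ if $x\cdot\xi+cT\ge M$; and $u^+_{0,z,T}(x)=\min\{e^{-\mu(x\cdot\xi+cT)}\phi(x+z)+d_2e^{-\mu_1(x\cdot\xi+cT)}\phi_1(x+z),\ u^+(x+z)\}$. *)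

theory Defs
  imports "HOL-Analysis.Analysis"
begin

text \<open>Periods are given by p :: 'n => real, the standard
  basis vector e_i is axis i 1.  Xp is the complex space X_p (complexified, for
  spectral purposes), Xp_real the real continuous p-periodic functions.\<close>

definition Xp :: "('n::finite \<Rightarrow> real) \<Rightarrow> (real^'n \<Rightarrow> complex) set" where
  "Xp p = {v. continuous_on UNIV v \<and> (\<forall>x i. v (x + p i *\<^sub>R axis i 1) = v x)}"

definition Xp_real :: "('n::finite \<Rightarrow> real) \<Rightarrow> (real^'n \<Rightarrow> real) set" where
  "Xp_real p = {v. continuous_on UNIV v \<and> (\<forall>x i. v (x + p i *\<^sub>R axis i 1) = v x)}"

definition Kop :: "(real^'n::finite \<Rightarrow> real) \<Rightarrow> real^'n \<Rightarrow> real
                     \<Rightarrow> (real^'n \<Rightarrow> complex) \<Rightarrow> real^'n \<Rightarrow> complex" where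
  "Kop k xi mu v x =
     (LINT y|lborel. complex_of_real (exp (- mu * ((y - x) \<bullet> xi)) * k (y - x)) * v y)"

definition Lop :: "(real^'n::finite \<Rightarrow> real) \<Rightarrow> real^'n \<Rightarrow> real \<Rightarrow> (real^'n \<Rightarrow> real)
                     \<Rightarrow> (real^'n \<Rightarrow> complex) \<Rightarrow> real^'n \<Rightarrow> complex" where
  "Lop k xi mu a0 v x = Kop k xi mu v x - v x + complex_of_real (a0 x) * v x"

text \<open>Spectrum of an operator A on X_p: lambda such that lambda I - A is not a bijection
  of X_p (for bounded operators this is equivalent to non-invertibility by the
  open mapping theorem).\<close>
definition spec_Xp :: "('n::finite \<Rightarrow> real) \<Rightarrow> ((real^'n \<Rightarrow> complex) \<Rightarrow> real^'n \<Rightarrow> complex)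
                        \<Rightarrow> complex set" where
  "spec_Xp p A = {lam. \<not> bij_betw (\<lambda>v x. lam * v x - A v x) (Xp p) (Xp p)}"

definition lambda0 :: "('n::finite \<Rightarrow> real) \<Rightarrow> (real^'n \<Rightarrow> real) \<Rightarrow> real^'n \<Rightarrow> real
                         \<Rightarrow> (real^'n \<Rightarrow> real) \<Rightarrow> real" where
  "lambda0 p k xi mu a0 = Sup (Re ` spec_Xp p (Lop k xi mu a0))"

text \<open>Principal eigenvalue: algebraically simple eigenvalue with an eigenfunction in
  X_p^+, the rest of the spectrum having smaller real part.\<close>
definition principal_eigenvalue :: "('n::finite \<Rightarrow> real)
      \<Rightarrow> ((real^'n \<Rightarrow> complex) \<Rightarrow> real^'n \<Rightarrow> complex) \<Rightarrow> real \<Rightarrow> bool" where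
  "principal_eigenvalue p A lam \<longleftrightarrow>
     (\<exists>phi \<in> Xp_real p. (\<forall>x. phi x \<ge> 0) \<and> (\<exists>x. phi x \<noteq> 0) \<and>
        A (\<lambda>x. complex_of_real (phi x)) = (\<lambda>x. complex_of_real lam * complex_of_real (phi x))) \<and>
     (\<exists>w \<in> Xp p. w \<noteq> (\<lambda>x. 0) \<and>
        {v \<in> Xp p. \<exists>n. ((\<lambda>u x. complex_of_real lam * u x - A u x) ^^ n) v = (\<lambda>x. 0)}
          = {(\<lambda>x. c * w x) | c. True}) \<and>
     (\<forall>nu \<in> spec_Xp p A. nu \<noteq> complex_of_real lam \<longrightarrow> Re nu < lam)"

definition is_solution :: "(real^'n::finite \<Rightarrow> real) \<Rightarrow> (real^'n \<Rightarrow> real \<Rightarrow> real) \<Rightarrow> real^'n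
      \<Rightarrow> (real^'n \<Rightarrow> real) \<Rightarrow> (real \<Rightarrow> real^'n \<Rightarrow> real) \<Rightarrow> bool" where
  "is_solution k f z u0 u \<longleftrightarrow>
     (\<forall>x. u 0 x = u0 x) \<and>
     (\<forall>t\<ge>0. u t \<in> borel_measurable lborel) \<and>
     (\<forall>T\<ge>0. \<exists>B. \<forall>t\<in>{0..T}. \<forall>x. \<bar>u t x\<bar> \<le> B) \<and>
     (\<forall>t\<ge>0. \<forall>x. ((\<lambda>s. u s x) has_real_derivative
          ((LINT y|lborel. k (y - x) * u t y) - u t x + u t x * f (x + z) (u t x)))
          (at t within {0..}))"

definition wfun :: "real^'n::finite \<Rightarrow> real \<Rightarrow> real \<Rightarrow> real \<Rightarrow> real
      \<Rightarrow> (real^'n \<Rightarrow> real) \<Rightarrow> (real^'n \<Rightarrow> real) \<Rightarrow> real^'n \<Rightarrow> real \<Rightarrow> real^'n \<Rightarrow> real" where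
  "wfun xi c mu mu1 d1 phi phi1 z T x =
     exp (- mu * (x \<bullet> xi + c * T)) * phi (x + z)
     - d1 * exp (- mu1 * (x \<bullet> xi + c * T)) * phi1 (x + z)"

text \<open>u^-_{0,z,T}; the argument w is meant to be w_{.,.} (as a function of z, T, x)\<close>
definition uminus0 :: "real^'n::finite \<Rightarrow> real \<Rightarrow> real \<Rightarrow> real \<Rightarrow> (real^'n \<Rightarrow> real)
      \<Rightarrow> (real^'n \<Rightarrow> real \<Rightarrow> real^'n \<Rightarrow> real) \<Rightarrow> real^'n \<Rightarrow> real \<Rightarrow> real^'n \<Rightarrow> real" where
  "uminus0 xi c M b phi0 w z T x =
     (if x \<bullet> xi + c * T < M then max (b * phi0 (x + z)) (w z T x) else w z T x)"

definition uplus0 :: "real^'n::finite \<Rightarrow> real \<Rightarrow> real \<Rightarrow> real \<Rightarrow> real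
      \<Rightarrow> (real^'n \<Rightarrow> real) \<Rightarrow> (real^'n \<Rightarrow> real) \<Rightarrow> (real^'n \<Rightarrow> real)
      \<Rightarrow> real^'n \<Rightarrow> real \<Rightarrow> real^'n \<Rightarrow> real" where
  "uplus0 xi c mu mu1 d2 phi phi1 up z T x =
     min (exp (- mu * (x \<bullet> xi + c * T)) * phi (x + z)
          + d2 * exp (- mu1 * (x \<bullet> xi + c * T)) * phi1 (x + z))
         (up (x + z))"

end

theory Submission
  imports Defs
begin

definition rdini :: "(real \<Rightarrow> real) \<Rightarrow> real \<Rightarrow> real \<Rightarrow> bool" where
  "rdini h t K \<longleftrightarrow> (\<forall>e>0. \<exists>d>0. \<forall>s. t < s \<and> s < t + d \<longrightarrow> h s \<le> h t + (K + e) * (s - t))"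

lemma rdini_deriv:
  assumes "(h has_real_derivative D) (at t within {t..})"
  shows "rdini h t D"
  unfolding rdini_def
proof (intro allI impI)
  fix e :: real assume e: "e > 0"
  from assms have "((\<lambda>y. (h y - h t) / (y - t)) \<longlongrightarrow> D) (at t within {t..})"
    by (simp add: has_field_derivative_iff)
  then have "eventually (\<lambda>y. dist ((h y - h t) / (y - t)) D < e) (at t within {t..})"
    using e by (rule tendstoD)
  then obtain d where d: "d > 0" and hd: "\<forall>y\<in>{t..}. y \<noteq> t \<and> dist y t < d \<longrightarrow>
      dist ((h y - h t) / (y - t)) D < e"
    unfolding eventually_at by (elim exE conjE) (rule that)
  show "\<exists>d>0. \<forall>s. t < s \<and> s < t + d \<longrightarrow> h s \<le> h t + (D + e) * (s - t)"
  proof (intro exI[of _ d] conjI allI impI d)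
    fix s assume s: "t < s \<and> s < t + d"
    have "s \<in> {t..}" "s \<noteq> t" "dist s t < d" using s by (auto simp: dist_real_def)
    then have "dist ((h s - h t) / (s - t)) D < e" using hd by blast
    then have "(h s - h t) / (s - t) \<le> D + e" by (auto simp: dist_real_def)
    then show "h s \<le> h t + (D + e) * (s - t)" using s by (simp add: divide_le_eq algebra_simps)
  qed
qed

lemma rdini_mono: "rdini h t K \<Longrightarrow> K \<le> K' \<Longrightarrow> rdini h t K'"
  unfolding rdini_def
proof (intro allI impI)
  fix e :: real assume a: "\<forall>e>0. \<exists>d>0. \<forall>s. t < s \<and> s < t + d \<longrightarrow> h s \<le> h t + (K + e) * (s - t)"
    and K: "K \<le> K'" and e: "e > 0"
  then obtain d where "d > 0" "\<forall>s. t < s \<and> s < t + d \<longrightarrow> h s \<le> h t + (K + e) * (s - t)" by blast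
  moreover have "\<forall>s. t < s \<longrightarrow> (K + e) * (s - t) \<le> (K' + e) * (s - t)"
    using K by (intro allI impI mult_right_mono) auto
  ultimately show "\<exists>d>0. \<forall>s. t < s \<and> s < t + d \<longrightarrow> h s \<le> h t + (K' + e) * (s - t)"
    by (meson order_trans add_left_mono)
qed

lemma rdini_add:
  assumes "rdini h1 t K1" "rdini h2 t K2"
  shows "rdini (\<lambda>s. h1 s + h2 s) t (K1 + K2)"
  unfolding rdini_def
proof (intro allI impI)
  fix e :: real assume e: "e > 0"
  obtain d1 where d1: "d1 > 0" "\<forall>s. t < s \<and> s < t + d1 \<longrightarrow> h1 s \<le> h1 t + (K1 + e/2) * (s - t)"
    using assms(1) e unfolding rdini_def by (meson half_gt_zero)
  obtain d2 where d2: "d2 > 0" "\<forall>s. t < s \<and> s < t + d2 \<longrightarrow> h2 s \<le> h2 t + (K2 + e/2) * (s - t)"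
    using assms(2) e unfolding rdini_def by (meson half_gt_zero)
  show "\<exists>d>0. \<forall>s. t < s \<and> s < t + d \<longrightarrow> h1 s + h2 s \<le> h1 t + h2 t + (K1 + K2 + e) * (s - t)"
  proof (intro exI[of _ "min d1 d2"] conjI allI impI)
    show "min d1 d2 > 0" using d1 d2 by simp
    fix s assume s: "t < s \<and> s < t + min d1 d2"
    then have "h1 s \<le> h1 t + (K1 + e/2) * (s - t)" "h2 s \<le> h2 t + (K2 + e/2) * (s - t)"
      using d1 d2 by auto
    moreover have "(K1 + K2 + e) * (s - t) = (K1 + e/2)*(s-t) + (K2 + e/2)*(s-t)" by (simp add: algebra_simps)
    ultimately show "h1 s + h2 s \<le> h1 t + h2 t + (K1 + K2 + e) * (s - t)"
      by linarith
  qed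
qed

lemma rdini_cong:
  assumes "rdini h t K" "d > 0" "\<And>s. t \<le> s \<Longrightarrow> s < t + d \<Longrightarrow> g s = h s"
  shows "rdini g t K"
  unfolding rdini_def
proof (intro allI impI)
  fix e :: real assume e: "e > 0"
  obtain d1 where d1: "d1 > 0" "\<forall>s. t < s \<and> s < t + d1 \<longrightarrow> h s \<le> h t + (K + e) * (s - t)"
    using assms(1) e unfolding rdini_def by blast
  show "\<exists>d>0. \<forall>s. t < s \<and> s < t + d \<longrightarrow> g s \<le> g t + (K + e) * (s - t)"
  proof (intro exI[of _ "min d d1"] conjI allI impI)
    show "min d d1 > 0" using d1 assms(2) by simp
    fix s assume s: "t < s \<and> s < t + min d d1"
    then have "g s = h s" "g t = h t" using assms(2,3) by auto
    then show "g s \<le> g t + (K + e) * (s - t)" using d1 s by auto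
  qed
qed

lemma rdini_const: "K \<ge> 0 \<Longrightarrow> rdini (\<lambda>s. a) t K"
  unfolding rdini_def by (auto intro!: exI[of _ 1])

lemma rdini_max:
  assumes "h1 t \<ge> h2 t \<Longrightarrow> rdini h1 t K" "h2 t \<ge> h1 t \<Longrightarrow> rdini h2 t K"
    and c1: "continuous (at t) h1" and c2: "continuous (at t) h2"
  shows "rdini (\<lambda>s. max (h1 s) (h2 s)) t K"
proof (cases "h1 t = h2 t")
  case True
  show ?thesis unfolding rdini_def
  proof (intro allI impI)
    fix e :: real assume e: "e > 0"
    obtain d1 where d1: "d1 > 0" "\<forall>s. t < s \<and> s < t + d1 \<longrightarrow> h1 s \<le> h1 t + (K + e) * (s - t)"
      using assms(1) True e unfolding rdini_def by auto
    obtain d2 where d2: "d2 > 0" "\<forall>s. t < s \<and> s < t + d2 \<longrightarrow> h2 s \<le> h2 t + (K + e) * (s - t)"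
      using assms(2) True e unfolding rdini_def by auto
    show "\<exists>d>0. \<forall>s. t < s \<and> s < t + d \<longrightarrow> max (h1 s) (h2 s) \<le> max (h1 t) (h2 t) + (K + e) * (s - t)"
    proof (intro exI[of _ "min d1 d2"] conjI allI impI)
      show "min d1 d2 > 0" using d1 d2 by simp
      fix s assume s: "t < s \<and> s < t + min d1 d2"
      then have "h1 s \<le> h1 t + (K + e) * (s - t)" "h2 s \<le> h2 t + (K + e) * (s - t)" using d1 d2 by auto
      then show "max (h1 s) (h2 s) \<le> max (h1 t) (h2 t) + (K + e) * (s - t)" using True by simp
    qed
  qed
next
  case False
  then consider "h1 t > h2 t" | "h2 t > h1 t" by linarith
  then show ?thesis
  proof cases
    case 1
    have "continuous (at t) (\<lambda>s. h1 s - h2 s)" using c1 c2 by (intro continuous_intros)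
    then have "eventually (\<lambda>s. h1 s - h2 s > 0) (at t)"
      using 1 unfolding isCont_def by (intro order_tendstoD(1)) auto
    then obtain d where d: "d > 0" "\<And>s. s \<noteq> t \<Longrightarrow> dist s t < d \<Longrightarrow> h1 s - h2 s > 0"
      unfolding eventually_at by auto
    show ?thesis
    proof (rule rdini_cong[OF assms(1) d(1)])
      show "h2 t \<le> h1 t" using 1 by simp
    next
      fix s assume "t \<le> s" "s < t + d"
      then show "max (h1 s) (h2 s) = h1 s"
        by (cases "s = t") (use 1 d(2)[of s] in \<open>auto simp: dist_real_def\<close>)
    qed
  next
    case 2
    have "continuous (at t) (\<lambda>s. h2 s - h1 s)" using c1 c2 by (intro continuous_intros)
    then have "eventually (\<lambda>s. h2 s - h1 s > 0) (at t)"
      using 2 unfolding isCont_def by (intro order_tendstoD(1)) auto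
    then obtain d where d: "d > 0" "\<And>s. s \<noteq> t \<Longrightarrow> dist s t < d \<Longrightarrow> h2 s - h1 s > 0"
      unfolding eventually_at by auto
    show ?thesis
    proof (rule rdini_cong[OF assms(2) d(1)])
      show "h1 t \<le> h2 t" using 2 by simp
    next
      fix s assume "t \<le> s" "s < t + d"
      then show "max (h1 s) (h2 s) = h2 s"
        by (cases "s = t") (use 2 d(2)[of s] in \<open>auto simp: dist_real_def\<close>)
    qed
  qed
qed

lemma growth1_aux:
  fixes h :: "real \<Rightarrow> real"
  assumes ab: "a \<le> b" and ha: "h a \<le> 0" and hc: "continuous_on {a..b} h" and K: "K \<ge> 0"
    and hd: "\<And>t. a \<le> t \<Longrightarrow> t < b \<Longrightarrow> h t > 0 \<Longrightarrow> rdini h t K"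
    and e: "e > 0"
  shows "h b \<le> (K + e) * (b - a) + e"
proof (rule ccontr)
  define g where "g r = (K + e) * (r - a) + e" for r
  have gmono: "\<And>r r'. r \<le> r' \<Longrightarrow> g r \<le> g r'" unfolding g_def using K e
    by (intro add_right_mono mult_left_mono) auto
  assume "\<not> h b \<le> (K + e) * (b - a) + e"
  then have hb: "h b > g b" by (simp add: g_def)
  define Z where "Z = {r \<in> {a..b}. h r > g r}"
  have Zne: "Z \<noteq> {}" and bZ: "b \<in> Z" using hb ab by (auto simp: Z_def)
  have Zbdd: "bdd_below Z" unfolding Z_def by (rule bdd_belowI[of _ a]) auto
  define s0 where "s0 = Inf Z"
  have s0a: "a \<le> s0" unfolding s0_def using Zne by (intro cInf_greatest) (auto simp: Z_def)
  have s0b: "s0 \<le> b" unfolding s0_def using bZ Zbdd by (rule cInf_lower)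
  have below: "h r \<le> g r" if "a \<le> r" "r < s0" for r
  proof (rule ccontr)
    assume "\<not> h r \<le> g r"
    then have "r \<in> Z" using that s0b by (auto simp: Z_def)
    then have "s0 \<le> r" unfolding s0_def using Zbdd by (rule cInf_lower)
    then show False using that by simp
  qed
  have hs0: "h s0 \<le> g s0"
  proof (cases "s0 = a")
    case True then show ?thesis using ha e by (simp add: g_def)
  next
    case False
    then have s0a': "a < s0" using s0a by simp
    show ?thesis
    proof (rule ccontr)
      assume "\<not> h s0 \<le> g s0"
      then have eps: "h s0 - g s0 > 0" by simp
      obtain dl where dl: "dl > 0" "\<forall>x'\<in>{a..b}. dist x' s0 < dl \<longrightarrow> dist (h x') (h s0) < h s0 - g s0"
        using hc eps s0a s0b unfolding continuous_on_iff by (meson atLeastAtMost_iff)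
      define r where "r = max a (s0 - dl/2)"
      have r: "a \<le> r" "r < s0" "r \<in> {a..b}" "dist r s0 < dl" using dl s0a' s0b
        by (auto simp: r_def dist_real_def)
      then have "dist (h r) (h s0) < h s0 - g s0" using dl by blast
      then have "h r > g s0" by (auto simp: dist_real_def)
      moreover have "g r \<le> g s0" using r by (intro gmono) simp
      ultimately show False using below[OF r(1,2)] by simp
    qed
  qed
  have s0b': "s0 < b" using hs0 hb s0b by (cases "s0 = b") auto
  obtain d1 where d1: "d1 > 0" "\<And>r. s0 < r \<Longrightarrow> r < s0 + d1 \<Longrightarrow> h r \<le> g r"
  proof (cases "h s0 > 0")
    case True
    then have "rdini h s0 K" using hd s0a s0b' by simp
    then obtain d where d: "d > 0" "\<forall>s. s0 < s \<and> s < s0 + d \<longrightarrow> h s \<le> h s0 + (K + e) * (s - s0)"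
      using e unfolding rdini_def by blast
    show ?thesis
    proof (rule that[OF d(1)])
      fix r assume "s0 < r" "r < s0 + d"
      then have "h r \<le> h s0 + (K + e) * (r - s0)" using d by blast
      also have "\<dots> \<le> g s0 + (K + e) * (r - s0)" using hs0 by simp
      also have "\<dots> = g r" by (simp add: g_def algebra_simps)
      finally show "h r \<le> g r" .
    qed
  next
    case False
    obtain dl where dl: "dl > 0" "\<forall>x'\<in>{a..b}. dist x' s0 < dl \<longrightarrow> dist (h x') (h s0) < e"
      using hc e s0a s0b unfolding continuous_on_iff by (meson atLeastAtMost_iff)
    show ?thesis
    proof (rule that[of "min dl (b - s0)"])
      show "min dl (b - s0) > 0" using dl s0b' by simp
      fix r assume r: "s0 < r" "r < s0 + min dl (b - s0)"
      then have "r \<in> {a..b}" "dist r s0 < dl" using s0a by (auto simp: dist_real_def)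
      then have "dist (h r) (h s0) < e" using dl by blast
      then have "h r < e" using False by (auto simp: dist_real_def)
      moreover have "g a \<le> g r" using r s0a by (intro gmono) simp
      ultimately show "h r \<le> g r" by (simp add: g_def)
    qed
  qed
  have "Inf Z < s0 + d1" using d1 s0_def by simp
  then obtain z where z: "z \<in> Z" "z < s0 + d1" using cInf_less_iff[OF Zne Zbdd] by blast
  have "s0 \<le> z" unfolding s0_def using z(1) Zbdd by (rule cInf_lower)
  moreover have "z \<noteq> s0" using z(1) hs0 by (auto simp: Z_def)
  ultimately have "s0 < z" by simp
  then have "h z \<le> g z" using d1 z by blast
  then show False using z(1) by (simp add: Z_def)
qed

lemma growth1:
  fixes h :: "real \<Rightarrow> real"
  assumes ab: "a \<le> b" and ha: "h a \<le> 0" and hc: "continuous_on {a..b} h" and K: "K \<ge> 0"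
    and hd: "\<And>t. a \<le> t \<Longrightarrow> t < b \<Longrightarrow> h t > 0 \<Longrightarrow> rdini h t K"
  shows "h b \<le> K * (b - a)"
proof (rule field_le_epsilon)
  fix e :: real assume e: "e > 0"
  define e' where "e' = e / (b - a + 1)"
  have e': "e' > 0" using e ab by (simp add: e'_def)
  have "h b \<le> (K + e') * (b - a) + e'" by (rule growth1_aux[OF assms e'])
  also have "\<dots> = K * (b - a) + e' * (b - a + 1)" by (simp add: algebra_simps)
  also have "e' * (b - a + 1) = e" using ab by (simp add: e'_def)
  finally show "h b \<le> K * (b - a) + e" .
qed

lemma compare_abstract:
  fixes d :: "real \<Rightarrow> 'a \<Rightarrow> real"
  assumes C: "C > 0" and d0: "\<And>x. d 0 x \<le> 0"
    and bnd: "\<And>T. T \<ge> 0 \<Longrightarrow> \<exists>B. \<forall>t\<in>{0..T}. \<forall>x. d t x \<le> B"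
    and cont: "\<And>x. continuous_on {0..} (\<lambda>s. d s x)"
    and der: "\<And>t x m. t \<ge> 0 \<Longrightarrow> 0 \<le> m \<Longrightarrow> 0 < d t x \<Longrightarrow> (\<forall>y. d t y \<le> m) \<Longrightarrow>
               rdini (\<lambda>s. d s x) t (C * m)"
    and t: "t \<ge> 0"
  shows "d t x \<le> 0"
proof -
  define \<tau> where "\<tau> = 1 / (2 * C)"
  have tau: "\<tau> > 0" "C * \<tau> = 1/2" using C by (auto simp: \<tau>_def)
  have step: "\<forall>t\<in>{a..a+\<tau>}. \<forall>x. d t x \<le> 0" if a: "a \<ge> 0" and IH: "\<forall>t\<in>{0..a}. \<forall>x. d t x \<le> 0" for a
  proof -
    obtain B where B: "\<forall>t\<in>{0..a+\<tau>}. \<forall>x. d t x \<le> B" using bnd[of "a + \<tau>"] a tau by auto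
    define B' where "B' = max B 0"
    have B'0: "B' \<ge> 0" by (simp add: B'_def)
    have hn: "\<forall>t\<in>{a..a+\<tau>}. \<forall>x. d t x \<le> B' / 2^n" for n
    proof (induct n)
      case 0 show ?case
      proof (intro ballI allI)
        fix t x assume "t \<in> {a..a+\<tau>}"
        then have "d t x \<le> B" using B a by auto
        then show "d t x \<le> B' / 2 ^ 0" by (simp add: B'_def)
      qed
    next
      case (Suc n)
      show ?case
      proof (intro ballI allI)
        fix t x assume t: "t \<in> {a..a+\<tau>}"
        have "d t x \<le> (C * (B' / 2^n)) * (t - a)"
        proof (rule growth1[of a t "\<lambda>s. d s x"])
          show "a \<le> t" using t by simp
          show "d a x \<le> 0" using IH a by auto
          show "continuous_on {a..t} (\<lambda>s. d s x)"
            by (rule continuous_on_subset[OF cont]) (use a in auto)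
          show "0 \<le> C * (B' / 2 ^ n)" using C B'0 by simp
          fix r assume r: "a \<le> r" "r < t" "0 < d r x"
          show "rdini (\<lambda>s. d s x) r (C * (B' / 2 ^ n))"
            by (rule der) (use r a B'0 t Suc in auto)
        qed
        also have "\<dots> \<le> (C * (B' / 2^n)) * \<tau>"
          using t C B'0 by (intro mult_left_mono) auto
        also have "\<dots> = (C * \<tau>) * (B' / 2^n)" by simp
        also have "\<dots> = B' / 2 ^ Suc n" using tau(2) by (simp add: field_simps)
        finally show "d t x \<le> B' / 2 ^ Suc n" .
      qed
    qed
    show ?thesis
    proof (intro ballI allI)
      fix t x assume t: "t \<in> {a..a+\<tau>}"
      show "d t x \<le> 0"
      proof (rule ccontr)
        assume "\<not> d t x \<le> 0"
        then have pos: "d t x > 0" by simp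
        obtain n where n: "B' / d t x < 2 ^ n" using real_arch_pow[of 2 "B' / d t x"] by auto
        then have "B' < d t x * 2 ^ n" using pos by (simp add: divide_less_eq mult.commute)
        then have "B' / 2 ^ n < d t x" by (simp add: divide_less_eq)
        moreover have "d t x \<le> B' / 2 ^ n" using hn[of n] t by blast
        ultimately show False by simp
      qed
    qed
  qed
  have all: "\<forall>t\<in>{0..real j * \<tau>}. \<forall>x. d t x \<le> 0" for j :: nat
  proof (induct j)
    case 0 then show ?case using d0 by simp
  next
    case (Suc j)
    have "\<forall>t\<in>{real j * \<tau>..real j * \<tau> + \<tau>}. \<forall>x. d t x \<le> 0"
      by (rule step) (use Suc tau in auto)
    then show ?case using Suc by (auto simp: distrib_right)
  qed
  obtain j :: nat where "t / \<tau> \<le> real j" using real_arch_simple by blast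
  then have "t \<le> real j * \<tau>" using tau by (simp add: divide_le_eq)
  then show ?thesis using all[of j] t by auto
qed

definition NL :: "(real^'n::finite \<Rightarrow> real) \<Rightarrow> (real^'n \<Rightarrow> real \<Rightarrow> real) \<Rightarrow> real^'n
     \<Rightarrow> (real^'n \<Rightarrow> real) \<Rightarrow> real^'n \<Rightarrow> real" where
  "NL k f z w x = (LINT y|lborel. k (y - x) * w y) - w x + w x * f (x + z) (w x)"

lemma lint_shift:
  fixes g :: "'a::euclidean_space \<Rightarrow> real"
  assumes "g \<in> borel_measurable borel"
  shows "(LINT y|lborel. g (a + y)) = (LINT y|lborel. g y)"
proof -
  have "(LINT y|lborel. g y) = (LINT y|distr lborel borel ((+) a). g y)"
    by (simp add: lborel_distr_plus)
  also have "\<dots> = (LINT y|lborel. g (a + y))"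
    by (rule integral_distr) (use assms in auto)
  finally show ?thesis by simp
qed

lemma sol_parts:
  assumes "is_solution k f z u0 u"
  shows "\<forall>x. u 0 x = u0 x" "\<forall>t\<ge>0. u t \<in> borel_measurable lborel"
    "\<forall>T\<ge>0. \<exists>B. \<forall>t\<in>{0..T}. \<forall>x. \<bar>u t x\<bar> \<le> B"
    "\<forall>t\<ge>0. \<forall>x. ((\<lambda>s. u s x) has_real_derivative
          ((LINT y|lborel. k (y - x) * u t y) - u t x + u t x * f (x + z) (u t x)))
          (at t within {0..})"
  using assms[unfolded is_solution_def]
  by (rule conjunct1, rule conjunct1[OF conjunct2], rule conjunct1[OF conjunct2[OF conjunct2]],
      rule conjunct2[OF conjunct2[OF conjunct2]])

lemma sol_facts:
  assumes "is_solution k f z u0 u"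
  shows sol_init: "\<And>x. u 0 x = u0 x"
    and sol_der: "\<And>t x. t \<ge> 0 \<Longrightarrow> ((\<lambda>s. u s x) has_real_derivative NL k f z (u t) x) (at t within {t..})"
    and sol_cont: "\<And>x. continuous_on {0..} (\<lambda>s. u s x)"
    and sol_bnd: "\<And>T. T \<ge> 0 \<Longrightarrow> \<exists>B. \<forall>t\<in>{0..T}. \<forall>x. \<bar>u t x\<bar> \<le> B"
    and sol_meas: "\<And>t. t \<ge> 0 \<Longrightarrow> u t \<in> borel_measurable lborel"
proof -
  note a = sol_parts[OF assms]
  show "\<And>x. u 0 x = u0 x" using a(1) by simp
  show "\<And>T. T \<ge> 0 \<Longrightarrow> \<exists>B. \<forall>t\<in>{0..T}. \<forall>x. \<bar>u t x\<bar> \<le> B" using a(3) by simp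
  show "\<And>t. t \<ge> 0 \<Longrightarrow> u t \<in> borel_measurable lborel" using a(2) by simp
  have d: "((\<lambda>s. u s x) has_real_derivative NL k f z (u t) x) (at t within {0..})" if "t \<ge> 0" for t x
    using a(4) that unfolding NL_def by simp
  show "\<And>t x. t \<ge> 0 \<Longrightarrow> ((\<lambda>s. u s x) has_real_derivative NL k f z (u t) x) (at t within {t..})"
    by (rule DERIV_subset[OF d]) auto
  show "continuous_on {0..} (\<lambda>s. u s x)" for x
    unfolding continuous_on_eq_continuous_within using d DERIV_continuous by (metis atLeast_iff)
qed

lemma sol_shift:
  assumes "is_solution k f z u0 u" "a > 0"
  shows "is_solution k f z (u a) (\<lambda>s. u (s + a))"
proof -
  note s = sol_parts[OF assms(1)]
  have der: "((\<lambda>s. u (s + a) x) has_real_derivative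
          ((LINT y|lborel. k (y - x) * u (t + a) y) - u (t + a) x + u (t + a) x * f (x + z) (u (t + a) x)))
          (at t within {0..})" if t: "t \<ge> 0" for t x
  proof -
    have ta: "t + a \<ge> 0" using t assms(2) by simp
    have "((\<lambda>s. u s x) has_real_derivative
          ((LINT y|lborel. k (y - x) * u (t + a) y) - u (t + a) x + u (t + a) x * f (x + z) (u (t + a) x)))
          (at (t + a) within {0..})" using s(4) ta by blast
    moreover have "at (t + a) within {0..} = at (t + a)"
      by (rule at_within_interior) (use t assms(2) in simp)
    ultimately have "((\<lambda>s. u s x) has_real_derivative
          ((LINT y|lborel. k (y - x) * u (t + a) y) - u (t + a) x + u (t + a) x * f (x + z) (u (t + a) x)))
          (at (t + a))" by simp
    then show ?thesis unfolding DERIV_shift by (rule has_field_derivative_at_within)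
  qed
  have meas: "u (t + a) \<in> borel_measurable lborel" if "t \<ge> 0" for t
  proof -
    have "t + a \<ge> 0" using that assms(2) by simp
    then show ?thesis using s(2) by blast
  qed
  have bnd: "\<exists>B. \<forall>t\<in>{0..T}. \<forall>x. \<bar>u (t + a) x\<bar> \<le> B" if "T \<ge> 0" for T
  proof -
    have "T + a \<ge> 0" using that assms(2) by simp
    then obtain B where B: "\<forall>t\<in>{0..T + a}. \<forall>x. \<bar>u t x\<bar> \<le> B" using s(3) by blast
    show ?thesis
    proof (intro exI[of _ B] ballI allI)
      fix t x assume "t \<in> {0..T}"
      then have "t + a \<in> {0..T + a}" using assms(2) by simp
      then show "\<bar>u (t + a) x\<bar> \<le> B" using B by blast
    qed
  qed
  show ?thesis unfolding is_solution_def
    using der meas bnd by simp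
qed

locale kf =
  fixes k :: "real^'n::finite \<Rightarrow> real" and f :: "real^'n \<Rightarrow> real \<Rightarrow> real" and \<delta>0 \<Lambda> :: real
  assumes kcont: "continuous_on UNIV k"
    and knn: "\<And>y. k y \<ge> 0"
    and ksupp: "\<And>y. norm y \<ge> \<delta>0 \<Longrightarrow> k y = 0"
    and kint1: "(LINT y|lborel. k y) = 1"
    and Lam: "\<And>x w. f x w \<le> \<Lambda>"
    and fmono: "\<And>x a b. 0 \<le> a \<Longrightarrow> a \<le> b \<Longrightarrow> f x b \<le> f x a"
    and fneg: "\<And>x w. w \<le> 0 \<Longrightarrow> f x w = f x 0"
begin

lemma kshift_cont: "continuous_on UNIV (\<lambda>y. k (y - x))"
  by (rule continuous_on_compose2[OF kcont continuous_on_diff[OF continuous_on_id continuous_on_const]]) simp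

lemma kshift_meas: "(\<lambda>y. k (y - x)) \<in> borel_measurable lborel"
  using borel_measurable_continuous_onI[OF kshift_cont] by simp

lemma int_cont:
  assumes "continuous_on UNIV g"
  shows "integrable lborel (\<lambda>y. k (y - x) * g y)"
proof -
  have c: "continuous_on (cball x \<delta>0) (\<lambda>y. k (y - x) * g y)"
    by (rule continuous_on_mult[OF continuous_on_subset[OF kshift_cont] continuous_on_subset[OF assms]]) simp_all
  have int: "integrable lborel (\<lambda>y. indicator (cball x \<delta>0) y *\<^sub>R (k (y - x) * g y))"
    by (rule borel_integrable_compact[OF compact_cball c])
  have pt: "indicator (cball x \<delta>0) y *\<^sub>R (k (y - x) * g y) = k (y - x) * g y" for y
  proof (cases "y \<in> cball x \<delta>0")
    case False
    then have "norm (y - x) \<ge> \<delta>0" by (simp add: dist_norm norm_minus_commute)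
    then show ?thesis using False ksupp by simp
  qed simp
  have eq: "(\<lambda>y. indicator (cball x \<delta>0) y *\<^sub>R (k (y - x) * g y)) = (\<lambda>y. k (y - x) * g y)"
    by (rule ext) (rule pt)
  show ?thesis using int unfolding eq .
qed

lemma kshift_int: "integrable lborel (\<lambda>y. k (y - x))"
  using int_cont[of "\<lambda>_. 1" x] by simp

lemma int_bdd:
  assumes "g \<in> borel_measurable lborel" "\<And>y. \<bar>g y\<bar> \<le> B"
  shows "integrable lborel (\<lambda>y. k (y - x) * g y)"
proof (rule Bochner_Integration.integrable_bound[of _ "\<lambda>y. B * k (y - x)"])
  show "integrable lborel (\<lambda>y. B * k (y - x))" using kshift_int by (rule integrable_mult_right)
  show "(\<lambda>y. k (y - x) * g y) \<in> borel_measurable lborel"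
    using kshift_meas assms(1) by (rule borel_measurable_times)
  show "AE y in lborel. norm (k (y - x) * g y) \<le> norm (B * k (y - x))"
  proof (rule AE_I2)
    fix y
    have B: "B \<ge> 0" using assms(2)[of y] by simp
    have "\<bar>k (y - x) * g y\<bar> = k (y - x) * \<bar>g y\<bar>" using knn by (simp add: abs_mult)
    also have "\<dots> \<le> k (y - x) * B" using knn assms(2) by (intro mult_left_mono) auto
    finally show "norm (k (y - x) * g y) \<le> norm (B * k (y - x))" using B knn by (simp add: abs_mult mult.commute)
  qed
qed

lemma kshift_one: "(LINT y|lborel. k (y - x)) = 1"
proof -
  have "(LINT y|lborel. (\<lambda>y. k (y - x)) (x + y)) = (LINT y|lborel. k (y - x))"
    by (rule lint_shift) (use kshift_meas in simp)
  then show ?thesis using kint1 by simp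
qed

lemma nonlin:
  assumes "b < a" "0 \<le> b \<or> a \<le> 0"
  shows "a * f y a - b * f y b \<le> \<bar>\<Lambda>\<bar> * (a - b)"
  using assms(2)
proof
  assume b: "0 \<le> b"
  have "f y a \<le> f y b" using fmono[OF b] assms(1) by simp
  then have 1: "b * (f y a - f y b) \<le> 0" using b by (simp add: mult_nonneg_nonpos)
  have "f y a \<le> \<bar>\<Lambda>\<bar>" using Lam[of y a] by simp
  then have 2: "(a - b) * f y a \<le> (a - b) * \<bar>\<Lambda>\<bar>" using assms(1) by (intro mult_left_mono) auto
  have "a * f y a - b * f y b = (a - b) * f y a + b * (f y a - f y b)" by (simp add: algebra_simps)
  then show ?thesis using 1 2 by (simp add: mult.commute)
next
  assume a: "a \<le> 0"
  have "b \<le> 0" using a assms(1) by simp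
  then have "f y a = f y 0" "f y b = f y 0" using fneg[OF a] fneg[of b] by blast+
  moreover have "f y 0 \<le> \<bar>\<Lambda>\<bar>" using Lam[of y 0] by simp
  then have "(a - b) * f y 0 \<le> (a - b) * \<bar>\<Lambda>\<bar>" using assms(1) by (intro mult_left_mono) auto
  ultimately show ?thesis by (simp add: algebra_simps)
qed

lemma NL_diff:
  assumes mv: "v \<in> borel_measurable lborel" and mu: "u \<in> borel_measurable lborel"
    and bv: "\<And>y. \<bar>v y\<bar> \<le> B" and bu: "\<And>y. \<bar>u y\<bar> \<le> B"
    and lt: "u x < v x" and sg: "0 \<le> u x \<or> v x \<le> 0"
    and m: "\<And>y. v y - u y \<le> m"
  shows "NL k f z v x - NL k f z u x \<le> (1 + \<bar>\<Lambda>\<bar>) * m"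
proof -
  have iv: "integrable lborel (\<lambda>y. k (y - x) * v y)" by (rule int_bdd[OF mv bv])
  have iu: "integrable lborel (\<lambda>y. k (y - x) * u y)" by (rule int_bdd[OF mu bu])
  have "(LINT y|lborel. k (y - x) * v y) - (LINT y|lborel. k (y - x) * u y)
        = (LINT y|lborel. k (y - x) * v y - k (y - x) * u y)"
    using iv iu by simp
  also have "\<dots> \<le> (LINT y|lborel. m * k (y - x))"
  proof (rule integral_mono)
    show "integrable lborel (\<lambda>y. k (y - x) * v y - k (y - x) * u y)" using iv iu by simp
    show "integrable lborel (\<lambda>y. m * k (y - x))" using kshift_int by (rule integrable_mult_right)
    fix y
    have "k (y - x) * (v y - u y) \<le> k (y - x) * m" using knn m by (intro mult_left_mono) auto
    then show "k (y - x) * v y - k (y - x) * u y \<le> m * k (y - x)" by (simp add: algebra_simps)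
  qed
  also have "\<dots> = m" using kshift_one by simp
  finally have I: "(LINT y|lborel. k (y - x) * v y) - (LINT y|lborel. k (y - x) * u y) \<le> m" .
  have N: "v x * f (x + z) (v x) - u x * f (x + z) (u x) \<le> \<bar>\<Lambda>\<bar> * (v x - u x)"
    by (rule nonlin[OF lt sg])
  have "\<bar>\<Lambda>\<bar> * (v x - u x) \<le> \<bar>\<Lambda>\<bar> * m" using m by (intro mult_left_mono) auto
  then show ?thesis using I N lt unfolding NL_def by (simp add: algebra_simps)
qed

lemma compare_pde:
  fixes v u :: "real \<Rightarrow> real^'n \<Rightarrow> real"
  assumes v0: "\<And>x. v 0 x \<le> u 0 x"
    and bnd: "\<And>T. T \<ge> 0 \<Longrightarrow> \<exists>B. \<forall>t\<in>{0..T}. \<forall>x. \<bar>v t x\<bar> \<le> B \<and> \<bar>u t x\<bar> \<le> B"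
    and mv: "\<And>t. t \<ge> 0 \<Longrightarrow> v t \<in> borel_measurable lborel"
    and mu: "\<And>t. t \<ge> 0 \<Longrightarrow> u t \<in> borel_measurable lborel"
    and cont: "\<And>x. continuous_on {0..} (\<lambda>s. v s x - u s x)"
    and sgn: "\<And>t x. t \<ge> 0 \<Longrightarrow> u t x < v t x \<Longrightarrow> 0 \<le> u t x \<or> v t x \<le> 0"
    and der: "\<And>t x. t \<ge> 0 \<Longrightarrow> u t x < v t x \<Longrightarrow>
               rdini (\<lambda>s. v s x - u s x) t (NL k f z (v t) x - NL k f z (u t) x)"
    and t: "t \<ge> 0"
  shows "v t x \<le> u t x"
proof -
  have "(\<lambda>t x. v t x - u t x) t x \<le> 0"
  proof (rule compare_abstract[where C="1 + \<bar>\<Lambda>\<bar>" and d="\<lambda>t x. v t x - u t x"])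
    show "0 < 1 + \<bar>\<Lambda>\<bar>" by simp
    show "v 0 x - u 0 x \<le> 0" for x using v0[of x] by simp
    show "\<exists>B. \<forall>t\<in>{0..T}. \<forall>x. v t x - u t x \<le> B" if T: "T \<ge> 0" for T
    proof -
      obtain B where "\<forall>t\<in>{0..T}. \<forall>x. \<bar>v t x\<bar> \<le> B \<and> \<bar>u t x\<bar> \<le> B" using bnd[OF T] by blast
      then show ?thesis
      proof (intro exI[of _ "2 * B"] ballI allI)
        fix t x assume "\<forall>t\<in>{0..T}. \<forall>x. \<bar>v t x\<bar> \<le> B \<and> \<bar>u t x\<bar> \<le> B" "t \<in> {0..T}"
        then have "\<bar>v t x\<bar> \<le> B" "\<bar>u t x\<bar> \<le> B" by blast+
        then show "v t x - u t x \<le> 2 * B" by linarith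
      qed
    qed
    show "continuous_on {0..} (\<lambda>s. v s x - u s x)" for x by (rule cont)
    show "rdini (\<lambda>s. v s x - u s x) t ((1 + \<bar>\<Lambda>\<bar>) * m)"
      if t: "t \<ge> 0" and m: "0 \<le> m" and pos: "0 < v t x - u t x" and all: "\<forall>y. v t y - u t y \<le> m"
      for t x m
    proof (rule rdini_mono[OF der])
      obtain B where B: "\<forall>s\<in>{0..t}. \<forall>x. \<bar>v s x\<bar> \<le> B \<and> \<bar>u s x\<bar> \<le> B" using bnd t by blast
      show "NL k f z (v t) x - NL k f z (u t) x \<le> (1 + \<bar>\<Lambda>\<bar>) * m"
      proof (rule NL_diff[OF mv[OF t] mu[OF t]])
        show "\<bar>v t y\<bar> \<le> B" for y using B t by auto
        show "\<bar>u t y\<bar> \<le> B" for y using B t by auto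
        show "u t x < v t x" using pos by simp
        then show "0 \<le> u t x \<or> v t x \<le> 0" using sgn t by blast
        show "v t y - u t y \<le> m" for y using all by blast
      qed
    qed (use t pos in auto)
  qed (rule t)
  then show ?thesis by simp
qed

lemma sol_nonneg:
  assumes sol: "is_solution k f z u0 u" and u0: "\<And>x. u0 x \<ge> 0" and t: "t \<ge> 0"
  shows "u t x \<ge> 0"
proof -
  have "(\<lambda>t x. 0) t x \<le> u t x"
  proof (rule compare_pde[where z=z and v="\<lambda>t x. 0" and u=u])
    show "0 \<le> u 0 x" for x using u0 sol_init[OF sol] by simp
    show "\<exists>B. \<forall>t\<in>{0..T}. \<forall>x. \<bar>0::real\<bar> \<le> B \<and> \<bar>u t x\<bar> \<le> B" if T: "T \<ge> 0" for T
    proof -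
      obtain B where B: "\<forall>t\<in>{0..T}. \<forall>x. \<bar>u t x\<bar> \<le> B" using sol_bnd[OF sol T] by blast
      show ?thesis
      proof (intro exI[of _ "max B 0"] ballI allI conjI)
        fix t x assume "t \<in> {0..T}"
        then have "\<bar>u t x\<bar> \<le> B" using B by blast
        then show "\<bar>u t x\<bar> \<le> max B 0" by simp
      qed simp
    qed
    show "(\<lambda>x. 0::real) \<in> borel_measurable lborel" for t :: real by simp
    show "u t \<in> borel_measurable lborel" if "t \<ge> 0" for t by (rule sol_meas[OF sol that])
    show "continuous_on {0..} (\<lambda>s. 0 - u s x)" for x
      using sol_cont[OF sol] by (intro continuous_intros) auto
    show "0 \<le> u t x \<or> (0::real) \<le> 0" for t x by simp
    show "rdini (\<lambda>s. 0 - u s x) t (NL k f z (\<lambda>x. 0) x - NL k f z (u t) x)" if "t \<ge> 0" for t x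
    proof -
      have "((\<lambda>s. 0 - u s x) has_real_derivative (0 - NL k f z (u t) x)) (at t within {t..})"
        by (intro DERIV_diff DERIV_const sol_der[OF sol that])
      moreover have "NL k f z (\<lambda>x. 0) x = 0" by (simp add: NL_def)
      ultimately show ?thesis by (simp add: rdini_deriv)
    qed
  qed (rule t)
  then show ?thesis by simp
qed

end

lemma per_int_nat:
  assumes per: "\<forall>x i. v (x + p i *\<^sub>R axis i 1) = v x"
  shows "v (x + (real n * p i) *\<^sub>R axis i (1::real)) = v x"
proof (induct n)
  case (Suc n)
  have "x + (real (Suc n) * p i) *\<^sub>R axis i 1 = (x + (real n * p i) *\<^sub>R axis i 1) + p i *\<^sub>R axis i 1"
    by (simp only: of_nat_Suc distrib_right mult_1_left scaleR_add_left add_ac)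
  then show ?case using per Suc by metis
qed simp

lemma per_int:
  assumes per: "\<forall>x i. v (x + p i *\<^sub>R axis i 1) = v x"
  shows "v (x + (of_int n * p i) *\<^sub>R axis i (1::real)) = v x"
proof (cases "n \<ge> 0")
  case True
  then have "of_int n = real (nat n)" by simp
  then show ?thesis using per_int_nat[OF per, of x "nat n" i] by metis
next
  case False
  define r where "r = real (nat (- n))"
  define y where "y = x + (of_int n * p i) *\<^sub>R axis i (1::real)"
  have r0: "of_int n + r = 0" using False by (simp add: r_def)
  have "y + (r * p i) *\<^sub>R axis i 1 = x + ((of_int n * p i) *\<^sub>R axis i 1 + (r * p i) *\<^sub>R axis i 1)"
    by (simp only: y_def add.assoc)
  also have "\<dots> = x + ((of_int n + r) * p i) *\<^sub>R axis i 1"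
    by (simp only: scaleR_add_left[symmetric] distrib_right[symmetric])
  also have "\<dots> = x" using r0 by simp
  finally have "x = y + (r * p i) *\<^sub>R axis i 1" by simp
  then have "v x = v y" using per_int_nat[OF per, of y "nat (-n)" i] unfolding r_def by metis
  then show ?thesis by (simp add: y_def)
qed

lemma per_sum:
  fixes v :: "real^'n::finite \<Rightarrow> 'b"
  assumes per: "\<forall>x i. v (x + p i *\<^sub>R axis i 1) = v x"
  shows "v (x + (\<Sum>i\<in>S. (of_int (n i) * p i) *\<^sub>R axis i 1)) = v x"
proof -
  have "finite S" by simp
  then show ?thesis
  proof (induct S arbitrary: x rule: finite_induct)
    case (insert j S)
    define a where "a = (of_int (n j) * p j) *\<^sub>R axis j (1::real)"
    define b where "b = (\<Sum>i\<in>S. (of_int (n i) * p i) *\<^sub>R axis i (1::real))"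
    have "x + (\<Sum>i\<in>insert j S. (of_int (n i) * p i) *\<^sub>R axis i 1) = x + (a + b)"
      unfolding sum.insert[OF insert(1,2)] a_def b_def ..
    also have "\<dots> = (x + b) + a" by (simp only: add_ac)
    finally have e: "x + (\<Sum>i\<in>insert j S. (of_int (n i) * p i) *\<^sub>R axis i 1) = (x + b) + a" .
    have "v ((x + b) + a) = v (x + b)" unfolding a_def by (rule per_int[OF per])
    also have "\<dots> = v x" unfolding b_def by (rule insert(3))
    finally show ?case unfolding e .
  qed simp
qed

lemma per_cell:
  fixes v :: "real^'n::finite \<Rightarrow> 'b"
  assumes per: "\<forall>x i. v (x + p i *\<^sub>R axis i 1) = v x" and pp: "\<forall>i. p i > 0"
  shows "\<exists>y\<in>cbox 0 (\<chi> i. p i). v y = v x"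
proof -
  define n where "n i = - \<lfloor>x $ i / p i\<rfloor>" for i
  define y where "y = x + (\<Sum>i\<in>UNIV. (of_int (n i) * p i) *\<^sub>R axis i (1::real))"
  have yj: "y $ j = x $ j - of_int \<lfloor>x $ j / p j\<rfloor> * p j" for j
  proof -
    have "(\<Sum>i\<in>UNIV. ((of_int (n i) * p i) *\<^sub>R axis i (1::real)) $ j) = (\<Sum>i\<in>UNIV. if i = j then of_int (n j) * p j else 0)"
      by (rule sum.cong) (auto simp: axis_def)
    also have "\<dots> = of_int (n j) * p j" by simp
    finally show ?thesis by (simp add: y_def n_def)
  qed
  have "y \<in> cbox 0 (\<chi> i. p i)"
    unfolding mem_box_cart
  proof
    fix j
    have pj: "p j > 0" using pp by simp
    have f1: "of_int \<lfloor>x $ j / p j\<rfloor> \<le> x $ j / p j" by (rule of_int_floor_le)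
    have f2: "x $ j / p j < of_int \<lfloor>x $ j / p j\<rfloor> + 1" by (rule real_of_int_floor_add_one_gt)
    have "of_int \<lfloor>x $ j / p j\<rfloor> * p j \<le> x $ j" using f1 pj by (simp add: le_divide_eq)
    moreover have "x $ j < (of_int \<lfloor>x $ j / p j\<rfloor> + 1) * p j" using f2 by (simp only: pos_divide_less_eq[OF pj])
    ultimately show "(0::real^'n) $ j \<le> y $ j \<and> y $ j \<le> (\<chi> i. p i) $ j"
      unfolding yj by (simp add: algebra_simps)
  qed
  moreover have "v y = v x" unfolding y_def by (rule per_sum[OF per])
  ultimately show ?thesis by blast
qed

lemma per_bounded:
  assumes "v \<in> Xp_real p" and pp: "\<forall>i. p i > 0"
  shows "\<exists>B. \<forall>x. \<bar>v x\<bar> \<le> B"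
proof -
  have c: "continuous_on UNIV v" and per: "\<forall>x i. v (x + p i *\<^sub>R axis i 1) = v x"
    using assms(1) by (auto simp: Xp_real_def)
  have "compact (v ` cbox 0 (\<chi> i. p i))"
    by (rule compact_continuous_image[OF continuous_on_subset[OF c] compact_cbox]) simp
  then obtain B where B: "\<forall>y\<in>v ` cbox 0 (\<chi> i. p i). norm y \<le> B"
    using compact_imp_bounded bounded_iff by metis
  show ?thesis
  proof (intro exI[of _ B] allI)
    fix x
    obtain y where "y \<in> cbox 0 (\<chi> i. p i)" "v y = v x" using per_cell[OF per pp] by blast
    then show "\<bar>v x\<bar> \<le> B" using B by force
  qed
qed

lemma per_min:
  assumes "v \<in> Xp_real p" and pp: "\<forall>i. p i > 0"
  shows "\<exists>x0. \<forall>x. v x0 \<le> v x"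
proof -
  have c: "continuous_on UNIV v" and per: "\<forall>x i. v (x + p i *\<^sub>R axis i 1) = v x"
    using assms(1) by (auto simp: Xp_real_def)
  have "0 \<in> cbox 0 (\<chi> i. p i)" unfolding mem_box_cart using pp by (simp add: less_imp_le)
  then have ne: "cbox 0 (\<chi> i. p i) \<noteq> {}" by blast
  obtain x0 where x0: "x0 \<in> cbox 0 (\<chi> i. p i)" "\<forall>y\<in>cbox 0 (\<chi> i. p i). v x0 \<le> v y"
    using continuous_attains_inf[OF compact_cbox ne continuous_on_subset[OF c]] by auto
  show ?thesis
  proof (intro exI[of _ x0] allI)
    fix x
    obtain y where "y \<in> cbox 0 (\<chi> i. p i)" "v y = v x" using per_cell[OF per pp] by blast
    then show "v x0 \<le> v x" using x0 by force
  qed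
qed

lemma per_le_sup:
  assumes "v \<in> Xp_real p" and pp: "\<forall>i. p i > 0" and sup: "(SUP x. v x) = 1"
  shows "v x \<le> 1"
proof -
  obtain B where B: "\<forall>x. \<bar>v x\<bar> \<le> B" using per_bounded[OF assms(1) pp] by blast
  have "bdd_above (range v)"
  proof (rule bdd_aboveI[of _ B])
    fix y assume "y \<in> range v"
    then obtain z where "y = v z" by blast
    then show "y \<le> B" using B abs_le_D1 by blast
  qed
  then have "v x \<le> (SUP x. v x)" by (rule cSUP_upper[OF UNIV_I])
  then show ?thesis using sup by simp
qed

lemma eig_real:
  assumes "Lop k xi m a0 (\<lambda>x. complex_of_real (g x)) = (\<lambda>x. complex_of_real L * complex_of_real (g x))"
  shows "(LINT y|lborel. exp (- m * ((y - x) \<bullet> xi)) * k (y - x) * g y) - g x + a0 x * g x = L * g x"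
proof -
  have "Lop k xi m a0 (\<lambda>x. complex_of_real (g x)) x = complex_of_real L * complex_of_real (g x)"
    using assms by (rule fun_cong)
  moreover have "Kop k xi m (\<lambda>x. complex_of_real (g x)) x
      = complex_of_real (LINT y|lborel. exp (- m * ((y - x) \<bullet> xi)) * k (y - x) * g y)"
    unfolding Kop_def by (simp only: of_real_mult[symmetric] integral_complex_of_real)
  ultimately have "complex_of_real ((LINT y|lborel. exp (- m * ((y - x) \<bullet> xi)) * k (y - x) * g y)
       - g x + a0 x * g x) = complex_of_real (L * g x)"
    unfolding Lop_def by (simp only: of_real_mult of_real_diff of_real_add)
  then show ?thesis by (simp only: of_real_eq_iff)
qed

lemma f_mono:
  fixes f :: "real^'n::finite \<Rightarrow> real \<Rightarrow> real"
  assumes H1_C1: "\<exists>D :: ((real^'n) \<times> real) \<Rightarrow> (((real^'n) \<times> real) \<Rightarrow>\<^sub>L real).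
                 (\<forall>q \<in> UNIV \<times> {0..}. ((\<lambda>(x, u). f x u) has_derivative blinfun_apply (D q))
                     (at q within UNIV \<times> {0..})) \<and> continuous_on (UNIV \<times> {0..}) D"
    and H1_mono: "\<exists>\<epsilon>>0. \<forall>x u D. u \<ge> 0 \<longrightarrow>
                   ((\<lambda>v. f x v) has_real_derivative D) (at u within {0..}) \<longrightarrow> D \<le> - \<epsilon>"
    and ab: "0 \<le> a" "a \<le> b"
  shows "f x b \<le> f x a"
proof -
  obtain D :: "((real^'n) \<times> real) \<Rightarrow> (((real^'n) \<times> real) \<Rightarrow>\<^sub>L real)" where
    D: "\<forall>q \<in> UNIV \<times> {0..}. ((\<lambda>(x, u). f x u) has_derivative blinfun_apply (D q)) (at q within UNIV \<times> {0..})"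
    using H1_C1 by blast
  obtain \<epsilon> where eps: "\<epsilon> > 0" "\<forall>x u D. u \<ge> 0 \<longrightarrow>
                   ((\<lambda>v. f x v) has_real_derivative D) (at u within {0..}) \<longrightarrow> D \<le> - \<epsilon>"
    using H1_mono by blast
  have pd: "((\<lambda>v. f x v) has_real_derivative blinfun_apply (D (x, u)) (0, 1)) (at u within {0..})"
    if u: "u \<ge> 0" for u
  proof -
    have g: "((\<lambda>v. (x, v)) has_derivative (\<lambda>h. (0, h))) (at u within {0..})"
      by (auto intro!: derivative_eq_intros)
    have "((\<lambda>v. (\<lambda>(x, u). f x u) (x, v)) has_derivative (\<lambda>h. blinfun_apply (D (x, u)) (0, h))) (at u within {0..})"
    proof (rule has_derivative_in_compose2[where g'="\<lambda>q. blinfun_apply (D q)", OF _ _ _ g])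
      show "((\<lambda>(x, u). f x u) has_derivative blinfun_apply (D q)) (at q within UNIV \<times> {0..})"
        if "q \<in> UNIV \<times> {0..}" for q using D that by blast
      show "(\<lambda>v. (x, v)) ` {0..} \<subseteq> UNIV \<times> {0..}" by auto
      show "u \<in> {0..}" using u by simp
    qed
    moreover have "(\<lambda>h. blinfun_apply (D (x, u)) (0, h)) = (\<lambda>h. blinfun_apply (D (x, u)) (0, 1) * h)"
    proof
      fix h :: real
      have "(0::real^'n, h) = h *\<^sub>R (0, 1)" by simp
      then show "blinfun_apply (D (x, u)) (0, h) = blinfun_apply (D (x, u)) (0, 1) * h"
        by (metis blinfun.scaleR_right mult.commute real_scaleR_def)
    qed
    ultimately show ?thesis unfolding has_field_derivative_def by simp
  qed
  have dle: "blinfun_apply (D (x, u)) (0, 1) \<le> 0" if "u \<ge> 0" for u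
    using eps pd[OF that] that by (meson less_imp_le order_trans neg_le_0_iff_le)
  show ?thesis
  proof (cases "a = b")
    case False
    then have lt: "a < b" using ab by simp
    have cont: "continuous_on {a..b} (\<lambda>v. f x v)"
    proof -
      have "continuous (at v within {0..}) (\<lambda>v. f x v)" if "v \<in> {a..b}" for v
        using pd[of v] that ab by (intro DERIV_continuous) auto
      then show ?thesis unfolding continuous_on_eq_continuous_within
        using ab by (meson atLeastAtMost_iff atLeast_iff continuous_within_subset order_trans subsetI)
    qed
    have dif: "(\<lambda>v. f x v) differentiable (at v)" if "a < v" "v < b" for v
    proof -
      have "at v within {0..} = at v" by (rule at_within_interior) (use that ab in simp)
      then show ?thesis using pd[of v] that ab unfolding real_differentiable_def
        by (metis less_eq_real_def order_trans)
    qed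
    obtain l c where lc: "a < c" "c < b" "DERIV (\<lambda>v. f x v) c :> l" "f x b - f x a = (b - a) * l"
      using MVT[OF lt cont dif] by blast
    have "DERIV (\<lambda>v. f x v) c :> blinfun_apply (D (x, c)) (0, 1)"
    proof -
      have "at c within {0..} = at c" by (rule at_within_interior) (use lc ab in simp)
      then show ?thesis using pd[of c] lc ab by simp
    qed
    then have "l = blinfun_apply (D (x, c)) (0, 1)" using lc(3) DERIV_unique by blast
    then have "l \<le> 0" using dle[of c] lc ab by simp
    then have "(b - a) * l \<le> 0" using lt by (intro mult_nonneg_nonpos) auto
    then show ?thesis using lc(4) by linarith
  qed simp
qed

lemma cont_shift: "continuous_on UNIV g \<Longrightarrow> continuous_on UNIV (\<lambda>y::'a::real_normed_vector. g (y + z))"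
  by (rule continuous_on_compose2[of UNIV g UNIV "\<lambda>y. y + z"]) (auto intro: continuous_on_add continuous_on_id continuous_on_const)

lemma cont_shiftm: "continuous_on UNIV g \<Longrightarrow> continuous_on UNIV (\<lambda>y::'a::real_normed_vector. g (y - z))"
  by (rule continuous_on_compose2[of UNIV g UNIV "\<lambda>y. y - z"]) (auto intro: continuous_on_diff continuous_on_id continuous_on_const)

lemma shift_int_general:
  fixes W g :: "'a::euclidean_space \<Rightarrow> real"
  assumes W: "continuous_on UNIV W" and g: "continuous_on UNIV g"
  shows "(LINT y|lborel. W (y - x) * g (y + z)) = (LINT y|lborel. W (y - (x + z)) * g y)"
proof -
  define G where "G y = W (y - (x + z)) * g y" for y
  have "continuous_on UNIV G" unfolding G_def
    by (rule continuous_on_mult[OF cont_shiftm[OF W] g])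
  then have "G \<in> borel_measurable borel" by (rule borel_measurable_continuous_onI)
  then have "(LINT y|lborel. G (z + y)) = (LINT y|lborel. G y)" by (rule lint_shift)
  moreover have pt: "G (z + y) = W (y - x) * g (y + z)" for y
  proof -
    have e1: "z + y - (x + z) = y - x" by (simp add: algebra_simps)
    have e2: "z + y = y + z" by (simp add: add.commute)
    have "G (z + y) = W (z + y - (x + z)) * g (z + y)" by (simp only: G_def)
    also have "\<dots> = W (y - x) * g (y + z)" by (subst e1, subst e2, rule refl)
    finally show ?thesis .
  qed
  ultimately have "(LINT y|lborel. W (y - x) * g (y + z)) = (LINT y|lborel. G y)" by (simp only: pt)
  then show ?thesis by (simp only: G_def)
qed

context kf
begin

lemma int_W:
  assumes "continuous_on UNIV g"
  shows "integrable lborel (\<lambda>y. exp (- m * ((y - x) \<bullet> xi)) * k (y - x) * g y)"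
proof -
  have c: "continuous_on UNIV (\<lambda>y. exp (- m * ((y - x) \<bullet> xi)) * g y)"
    by (intro continuous_on_mult[OF _ assms] continuous_intros)
  have "integrable lborel (\<lambda>y. k (y - x) * (exp (- m * ((y - x) \<bullet> xi)) * g y))"
    by (rule int_cont[OF c])
  moreover have "(\<lambda>y. k (y - x) * (exp (- m * ((y - x) \<bullet> xi)) * g y)) = (\<lambda>y. exp (- m * ((y - x) \<bullet> xi)) * k (y - x) * g y)"
    by (simp add: mult_ac)
  ultimately show ?thesis by simp
qed

lemma Wcont: "continuous_on UNIV (\<lambda>d. exp (- m * (d \<bullet> xi)) * k d)"
  by (intro continuous_on_mult[OF _ kcont] continuous_intros)

lemma exp_split:
  "exp (- m * (y \<bullet> xi + c * T)) = exp (- m * (x \<bullet> xi + c * T)) * exp (- m * ((y - x) \<bullet> xi))"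
proof -
  have "y \<bullet> xi + c * T = (x \<bullet> xi + c * T) + (y - x) \<bullet> xi" by (simp add: inner_diff_left)
  then have "- m * (y \<bullet> xi + c * T) = - m * (x \<bullet> xi + c * T) + - m * ((y - x) \<bullet> xi)"
    by (simp add: algebra_simps)
  then have "exp (- m * (y \<bullet> xi + c * T)) = exp (- m * (x \<bullet> xi + c * T) + - m * ((y - x) \<bullet> xi))"
    by (rule arg_cong)
  then show ?thesis by (simp only: exp_add)
qed

lemma super_step:
  fixes xi :: "real^'n" and c mu mu1 d2 L1 t2 :: real and phi phi1 uplus :: "real^'n \<Rightarrow> real"
  assumes phic: "continuous_on UNIV phi" and phinn: "\<And>x. phi x \<ge> 0"
    and phieig: "\<And>x. (LINT y|lborel. exp (- mu * ((y - x) \<bullet> xi)) * k (y - x) * phi y) - phi x + f x 0 * phi x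
                 = (c * mu) * phi x"
    and phi1c: "continuous_on UNIV phi1" and phi1nn: "\<And>x. phi1 x \<ge> 0"
    and phi1eig: "\<And>x. (LINT y|lborel. exp (- mu1 * ((y - x) \<bullet> xi)) * k (y - x) * phi1 y) - phi1 x + f x 0 * phi1 x
                 = L1 * phi1 x"
    and L1: "L1 \<le> c * mu1"
    and upc: "continuous_on UNIV uplus" and upnn: "\<And>x. uplus x \<ge> 0" and upb: "\<And>x. uplus x \<le> Ub"
    and upstat: "\<And>x. (LINT y|lborel. k (y - x) * uplus y) - uplus x + uplus x * f x (uplus x) = 0"
    and d2: "d2 \<ge> 0"
    and sol: "is_solution k f z (uplus0 xi c mu mu1 d2 phi phi1 uplus z t2) u2"
    and s: "s \<ge> 0"
  shows "u2 s x \<le> uplus0 xi c mu mu1 d2 phi phi1 uplus z (t2 - s) x"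
proof -
  define E where "E s y = exp (- mu * (y \<bullet> xi + c * (t2 - s))) * phi (y + z)
      + d2 * exp (- mu1 * (y \<bullet> xi + c * (t2 - s))) * phi1 (y + z)" for s y
  define P where "P s y = uplus0 xi c mu mu1 d2 phi phi1 uplus z (t2 - s) y" for s y
  have P: "P s y = min (E s y) (uplus (y + z))" for s y by (simp add: P_def E_def uplus0_def)
  have Enn: "E s y \<ge> 0" for s y unfolding E_def using phinn phi1nn d2 by (intro add_nonneg_nonneg mult_nonneg_nonneg) auto
  have Pnn: "P s y \<ge> 0" for s y unfolding P using Enn upnn by simp
  have Pb: "P s y \<le> Ub" for s y unfolding P using upb[of "y + z"] by linarith
  have phic': "continuous_on UNIV (\<lambda>y. phi (y + z))" by (rule cont_shift[OF phic])
  have phi1c': "continuous_on UNIV (\<lambda>y. phi1 (y + z))" by (rule cont_shift[OF phi1c])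
  have upc': "continuous_on UNIV (\<lambda>y. uplus (y + z))" by (rule cont_shift[OF upc])
  have Ecy: "continuous_on UNIV (E s)" for s unfolding E_def
    by (intro continuous_on_add continuous_on_mult[OF _ phic'] continuous_on_mult[OF _ phi1c'] continuous_intros)
  have Pcy: "continuous_on UNIV (P s)" for s
    unfolding P by (rule continuous_on_min[OF Ecy upc'])
  have Ecs: "continuous_on UNIV (\<lambda>s. E s y)" for y unfolding E_def
    by (intro continuous_intros)
  have Pcs: "continuous_on UNIV (\<lambda>s. P s y)" for y
    unfolding P by (intro continuous_on_min[OF Ecs] continuous_intros)
  have Pmeas: "P s \<in> borel_measurable lborel" for s
    using borel_measurable_continuous_onI[OF Pcy] by simp
  define A where "A y = (LINT w|lborel. exp (- mu * ((w - y) \<bullet> xi)) * k (w - y) * phi w)" for y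
  define A1 where "A1 y = (LINT w|lborel. exp (- mu1 * ((w - y) \<bullet> xi)) * k (w - y) * phi1 w)" for y
  have Eint: "(LINT y|lborel. k (y - x) * E s y)
      = exp (- mu * (x \<bullet> xi + c * (t2 - s))) * A (x + z)
        + d2 * exp (- mu1 * (x \<bullet> xi + c * (t2 - s))) * A1 (x + z)" for s x
  proof -
    define e where "e = exp (- mu * (x \<bullet> xi + c * (t2 - s)))"
    define e1 where "e1 = exp (- mu1 * (x \<bullet> xi + c * (t2 - s)))"
    have i1: "integrable lborel (\<lambda>y. exp (- mu * ((y - x) \<bullet> xi)) * k (y - x) * phi (y + z))"
      by (rule int_W[OF phic'])
    have i2: "integrable lborel (\<lambda>y. exp (- mu1 * ((y - x) \<bullet> xi)) * k (y - x) * phi1 (y + z))"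
      by (rule int_W[OF phi1c'])
    have pt: "k (y - x) * E s y = e * (exp (- mu * ((y - x) \<bullet> xi)) * k (y - x) * phi (y + z))
          + (d2 * e1) * (exp (- mu1 * ((y - x) \<bullet> xi)) * k (y - x) * phi1 (y + z))" for y
      unfolding E_def e_def e1_def exp_split[of mu y xi c "t2 - s" x] exp_split[of mu1 y xi c "t2 - s" x]
      by (simp add: algebra_simps)
    have "(LINT y|lborel. k (y - x) * E s y)
        = (LINT y|lborel. e * (exp (- mu * ((y - x) \<bullet> xi)) * k (y - x) * phi (y + z))
          + (d2 * e1) * (exp (- mu1 * ((y - x) \<bullet> xi)) * k (y - x) * phi1 (y + z)))"
      unfolding pt ..
    also have "\<dots> = e * (LINT y|lborel. exp (- mu * ((y - x) \<bullet> xi)) * k (y - x) * phi (y + z))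
          + (d2 * e1) * (LINT y|lborel. exp (- mu1 * ((y - x) \<bullet> xi)) * k (y - x) * phi1 (y + z))"
      using i1 i2 by simp
    also have "(LINT y|lborel. exp (- mu * ((y - x) \<bullet> xi)) * k (y - x) * phi (y + z)) = A (x + z)"
      using shift_int_general[OF Wcont[of mu xi] phic, of x z] unfolding A_def by simp
    also have "(LINT y|lborel. exp (- mu1 * ((y - x) \<bullet> xi)) * k (y - x) * phi1 (y + z)) = A1 (x + z)"
      using shift_int_general[OF Wcont[of mu1 xi] phi1c, of x z] unfolding A1_def by simp
    finally show ?thesis unfolding e_def e1_def by (simp add: mult_ac)
  qed
  define E' where "E' s y = exp (- mu * (y \<bullet> xi + c * (t2 - s))) * (mu * c) * phi (y + z)
      + d2 * (exp (- mu1 * (y \<bullet> xi + c * (t2 - s))) * (mu1 * c)) * phi1 (y + z)" for s y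
  have Eder: "((\<lambda>s. E s y) has_real_derivative E' s y) (at s)" for s y
    unfolding E_def E'_def by (auto intro!: derivative_eq_intros simp: algebra_simps)
  have NLE: "NL k f z (P t) x \<le> E' t x" if act: "P t x = E t x" for t x
  proof -
    have "(LINT y|lborel. k (y - x) * P t y) \<le> (LINT y|lborel. k (y - x) * E t y)"
    proof (rule integral_mono)
      show "integrable lborel (\<lambda>y. k (y - x) * P t y)" by (rule int_cont[OF Pcy])
      show "integrable lborel (\<lambda>y. k (y - x) * E t y)" by (rule int_cont[OF Ecy])
      fix y show "k (y - x) * P t y \<le> k (y - x) * E t y" unfolding P using knn by (intro mult_left_mono) auto
    qed
    moreover have "E t x * f (x + z) (E t x) \<le> E t x * f (x + z) 0"
      using Enn fmono[of 0 "E t x"] by (intro mult_left_mono) auto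
    ultimately have "NL k f z (P t) x \<le> (LINT y|lborel. k (y - x) * E t y) - E t x + E t x * f (x + z) 0"
      unfolding NL_def act by simp
    also have "\<dots> = exp (- mu * (x \<bullet> xi + c * (t2 - t))) * (A (x + z) - phi (x + z) + f (x + z) 0 * phi (x + z))
        + d2 * exp (- mu1 * (x \<bullet> xi + c * (t2 - t))) * (A1 (x + z) - phi1 (x + z) + f (x + z) 0 * phi1 (x + z))"
      unfolding Eint by (simp add: E_def algebra_simps)
    also have "\<dots> = exp (- mu * (x \<bullet> xi + c * (t2 - t))) * ((c * mu) * phi (x + z))
        + d2 * exp (- mu1 * (x \<bullet> xi + c * (t2 - t))) * (L1 * phi1 (x + z))"
      using phieig[of "x + z"] phi1eig[of "x + z"] unfolding A_def A1_def by simp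
    also have "\<dots> \<le> exp (- mu * (x \<bullet> xi + c * (t2 - t))) * ((c * mu) * phi (x + z))
        + d2 * exp (- mu1 * (x \<bullet> xi + c * (t2 - t))) * ((c * mu1) * phi1 (x + z))"
      using L1 phi1nn d2 by (intro add_left_mono mult_left_mono mult_right_mono) auto
    also have "\<dots> = E' t x" by (simp add: E'_def algebra_simps)
    finally show ?thesis .
  qed
  have NLU: "NL k f z (P t) x \<le> 0" if act: "P t x = uplus (x + z)" for t x
  proof -
    have "(LINT y|lborel. k (y - x) * P t y) \<le> (LINT y|lborel. k (y - x) * uplus (y + z))"
    proof (rule integral_mono)
      show "integrable lborel (\<lambda>y. k (y - x) * P t y)" by (rule int_cont[OF Pcy])
      show "integrable lborel (\<lambda>y. k (y - x) * uplus (y + z))" by (rule int_cont[OF upc'])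
      fix y show "k (y - x) * P t y \<le> k (y - x) * uplus (y + z)" unfolding P using knn by (intro mult_left_mono) auto
    qed
    moreover have "(LINT y|lborel. k (y - x) * uplus (y + z)) = (LINT y|lborel. k (y - (x + z)) * uplus y)"
      by (rule shift_int_general[OF kcont upc])
    ultimately have "NL k f z (P t) x \<le> (LINT y|lborel. k (y - (x + z)) * uplus y) - uplus (x + z)
        + uplus (x + z) * f (x + z) (uplus (x + z))"
      unfolding NL_def act by simp
    also have "\<dots> = 0" by (rule upstat)
    finally show ?thesis .
  qed
  have rdP: "rdini (\<lambda>s. - P s x) t (- NL k f z (P t) x)" for t x
  proof -
    have eq: "(\<lambda>s. - P s x) = (\<lambda>s. max (- E s x) (- uplus (x + z)))" unfolding P by (rule ext) (rule minus_min_eq_max)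
    show ?thesis unfolding eq
    proof (rule rdini_max)
      assume "- uplus (x + z) \<le> - E t x"
      then have act: "P t x = E t x" unfolding P by simp
      have "((\<lambda>s. - E s x) has_real_derivative - E' t x) (at t within {t..})"
        by (rule has_field_derivative_at_within[OF DERIV_minus[OF Eder]])
      then have "rdini (\<lambda>s. - E s x) t (- E' t x)" by (rule rdini_deriv)
      then show "rdini (\<lambda>s. - E s x) t (- NL k f z (P t) x)"
        by (rule rdini_mono) (use NLE[OF act] in simp)
    next
      assume "- E t x \<le> - uplus (x + z)"
      then have act: "P t x = uplus (x + z)" unfolding P by simp
      show "rdini (\<lambda>s. - uplus (x + z)) t (- NL k f z (P t) x)"
        by (rule rdini_const) (use NLU[OF act] in simp)
    next
      show "isCont (\<lambda>s. - E s x) t" by (rule continuous_minus[OF DERIV_isCont[OF Eder]])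
      show "isCont (\<lambda>s. - uplus (x + z)) t" by (rule continuous_const)
    qed
  qed
  have "u2 s x \<le> P s x"
  proof (rule compare_pde[where z=z and v=u2 and u=P])
    show "u2 0 x \<le> P 0 x" for x using sol_init[OF sol] by (simp add: P_def)
    show "\<exists>B. \<forall>t\<in>{0..T}. \<forall>x. \<bar>u2 t x\<bar> \<le> B \<and> \<bar>P t x\<bar> \<le> B" if T: "T \<ge> 0" for T
    proof -
      obtain B where B: "\<forall>t\<in>{0..T}. \<forall>x. \<bar>u2 t x\<bar> \<le> B" using sol_bnd[OF sol T] by blast
      show ?thesis
      proof (intro exI[of _ "max B Ub"] ballI allI conjI)
        fix t x assume "t \<in> {0..T}"
        then have "\<bar>u2 t x\<bar> \<le> B" using B by blast
        then show "\<bar>u2 t x\<bar> \<le> max B Ub" by simp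
        show "\<bar>P t x\<bar> \<le> max B Ub" using Pnn[of t x] Pb[of t x] by simp
      qed
    qed
    show "u2 t \<in> borel_measurable lborel" if "t \<ge> 0" for t by (rule sol_meas[OF sol that])
    show "P t \<in> borel_measurable lborel" for t by (rule Pmeas)
    show "continuous_on {0..} (\<lambda>s. u2 s x - P s x)" for x
      by (intro continuous_on_diff sol_cont[OF sol] continuous_on_subset[OF Pcs]) simp
    show "0 \<le> P t x \<or> u2 t x \<le> 0" for t x using Pnn by simp
    show "rdini (\<lambda>s. u2 s x - P s x) t (NL k f z (u2 t) x - NL k f z (P t) x)" if t: "t \<ge> 0" for t x
    proof -
      have "rdini (\<lambda>s. u2 s x + - P s x) t (NL k f z (u2 t) x + - NL k f z (P t) x)"
        by (rule rdini_add[OF rdini_deriv[OF sol_der[OF sol t]] rdP])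
      then show ?thesis by simp
    qed
  qed (rule s)
  then show ?thesis by (simp add: P_def)
qed

end

lemma W0_from_M:
  fixes xi :: "real^'n::finite"
  assumes xin: "norm xi = 1" and d0: "delta0 > 0"
    and M_prop: "\<forall>z T x. M - 2 * delta0 \<le> x \<bullet> xi + c * T \<and> x \<bullet> xi + c * T \<le> M
                   \<longrightarrow> wfun xi c mu mu1 d1 phi phi1 z T x \<ge> b"
  shows "exp (- mu * M) * phi q - d1 * exp (- mu1 * M) * phi1 q \<ge> b"
proof -
  define x' where "x' = M *\<^sub>R xi"
  define z' where "z' = q - x'"
  have xx: "xi \<bullet> xi = 1" using xin by (simp add: dot_square_norm)
  have sx: "x' \<bullet> xi + c * 0 = M" unfolding x'_def using xx by simp
  have "wfun xi c mu mu1 d1 phi phi1 z' 0 x' \<ge> b"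
    using M_prop sx d0 by auto
  moreover have "x' + z' = q" unfolding z'_def by simp
  ultimately show ?thesis unfolding wfun_def sx by simp
qed

lemma W_nonneg:
  fixes mu mu1 d1 b M sigma a a1 :: real
  assumes mu: "mu < mu1" and d1: "d1 > 0" and b: "b > 0" and a1: "a1 \<ge> 0"
    and W0: "exp (- mu * M) * a - d1 * exp (- mu1 * M) * a1 \<ge> b"
    and sg: "sigma \<ge> M"
  shows "exp (- mu * sigma) * a - d1 * exp (- mu1 * sigma) * a1 \<ge> 0"
proof -
  define e where "e = exp (- mu * sigma)"
  define r where "r = exp (- (mu1 - mu) * sigma)"
  define R where "R = exp (- (mu1 - mu) * M)"
  define eM where "eM = exp (- mu * M)"
  have e1: "exp (- mu1 * sigma) = e * r" unfolding e_def r_def by (simp add: exp_add[symmetric] algebra_simps)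
  have e2: "exp (- mu1 * M) = eM * R" unfolding eM_def R_def by (simp add: exp_add[symmetric] algebra_simps)
  have rR: "r \<le> R" unfolding r_def R_def using mu sg by simp
  have epos: "e > 0" "eM > 0" unfolding e_def eM_def by simp_all
  have "eM * (a - d1 * R * a1) \<ge> b" using W0 unfolding e2 eM_def[symmetric] by (simp add: algebra_simps)
  then have br: "a - d1 * R * a1 > 0" using b epos(2) by (smt (verit) mult_le_0_iff)
  have "d1 * r * a1 \<le> d1 * R * a1" using rR d1 a1 by (intro mult_right_mono mult_left_mono) auto
  then have "a - d1 * r * a1 \<ge> 0" using br by linarith
  then have "e * (a - d1 * r * a1) \<ge> 0" using epos by simp
  then show ?thesis unfolding e1 e_def[symmetric] by (simp add: algebra_simps)
qed

lemma W_upper: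
  fixes mu mu1 A sigma :: real
  assumes mu: "0 < mu" "mu < mu1" and A: "A > 0"
  shows "exp (- mu * sigma) - A * exp (- mu1 * sigma) \<le> exp (- mu * (ln A / (mu1 - mu)))"
proof (cases "sigma \<ge> ln A / (mu1 - mu)")
  case True
  then have "mu * (ln A / (mu1 - mu)) \<le> mu * sigma" using mu by (intro mult_left_mono) auto
  then have "exp (- mu * sigma) \<le> exp (- mu * (ln A / (mu1 - mu)))" by simp
  moreover have "A * exp (- mu1 * sigma) \<ge> 0" using A by simp
  ultimately show ?thesis by linarith
next
  case False
  then have "(mu1 - mu) * sigma < ln A" using mu by (simp add: field_simps)
  then have "exp ((mu1 - mu) * sigma) < A" using A by (metis exp_less_cancel_iff exp_ln)
  then have X: "exp (- mu1 * sigma) * exp ((mu1 - mu) * sigma) < exp (- mu1 * sigma) * A"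
    by (intro mult_strict_left_mono) auto
  have Y: "exp (- mu1 * sigma) * exp ((mu1 - mu) * sigma) = exp (- mu * sigma)"
    by (simp add: exp_add[symmetric] algebra_simps)
  have "exp (- mu * sigma) < exp (- mu1 * sigma) * A" using X unfolding Y .
  then have "exp (- mu * sigma) - A * exp (- mu1 * sigma) < 0" by (simp add: mult.commute)
  then show ?thesis by (smt (verit) exp_gt_zero)
qed

context kf
begin

lemma sub_step:
  fixes xi :: "real^'n" and c mu mu1 d1 b M t2 q1 :: real and phi phi1 phi0 :: "real^'n \<Rightarrow> real"
  assumes d0: "\<delta>0 > 0" and xin: "norm xi = 1"
    and mu: "0 < mu" "mu < mu1" and d1: "d1 > 0" and bpos: "b > 0"
    and phic: "continuous_on UNIV phi" and phile: "\<And>x. phi x \<le> 1"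
    and phi1c: "continuous_on UNIV phi1" and phi1lb: "\<And>x. phi1 x \<ge> q1" and q1: "q1 > 0"
    and phi0c: "continuous_on UNIV phi0" and phi0pos: "\<And>x. phi0 x > 0" and phi0le: "\<And>x. phi0 x \<le> 1"
    and d1_sub: "\<forall>z T t x. \<exists>D.
        ((\<lambda>s. wfun xi c mu mu1 d1 phi phi1 z (T - s) x) has_real_derivative D) (at t) \<and>
        D \<le> (LINT y|lborel. k (y - x) * wfun xi c mu mu1 d1 phi phi1 z (T - t) y)
             - wfun xi c mu mu1 d1 phi phi1 z (T - t) x
             + f (x + z) (wfun xi c mu mu1 d1 phi phi1 z (T - t) x)
               * wfun xi c mu mu1 d1 phi phi1 z (T - t) x"
    and b_sub: "\<forall>x z. (LINT y|lborel. k (y - x) * (b * phi0 (y + z))) - b * phi0 (x + z)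
                   + f (x + z) (b * phi0 (x + z)) * (b * phi0 (x + z)) \<ge> 0"
    and M_prop: "\<forall>z T x. M - 2 * \<delta>0 \<le> x \<bullet> xi + c * T \<and> x \<bullet> xi + c * T \<le> M
                   \<longrightarrow> wfun xi c mu mu1 d1 phi phi1 z T x \<ge> b"
  shows sub_nonneg: "\<And>T y. uminus0 xi c M b phi0 (wfun xi c mu mu1 d1 phi phi1) z T y \<ge> 0"
    and sub_le: "\<And>u2 s x. is_solution k f z (uminus0 xi c M b phi0 (wfun xi c mu mu1 d1 phi phi1) z t2) u2 \<Longrightarrow>
        s \<ge> 0 \<Longrightarrow> uminus0 xi c M b phi0 (wfun xi c mu mu1 d1 phi phi1) z (t2 - s) x \<le> u2 s x"
proof -
  define W where "W T y = wfun xi c mu mu1 d1 phi phi1 z T y" for T y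
  define V where "V s y = uminus0 xi c M b phi0 (wfun xi c mu mu1 d1 phi phi1) z (t2 - s) y" for s y
  define sg where "sg s y = y \<bullet> xi + c * (t2 - s)" for s y
  have Vdef: "V s y = (if sg s y < M then max (b * phi0 (y + z)) (W (t2 - s) y) else W (t2 - s) y)" for s y
    by (simp add: V_def uminus0_def W_def sg_def)
  have Wdef: "W T y = exp (- mu * (y \<bullet> xi + c * T)) * phi (y + z)
      - d1 * exp (- mu1 * (y \<bullet> xi + c * T)) * phi1 (y + z)" for T y
    by (simp add: W_def wfun_def)
  have W0: "exp (- mu * M) * phi q - d1 * exp (- mu1 * M) * phi1 q \<ge> b" for q
    by (rule W0_from_M[OF xin d0 M_prop])
  have Wnn: "W T y \<ge> 0" if "y \<bullet> xi + c * T \<ge> M" for T y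
    unfolding Wdef using W_nonneg[OF mu(2) d1 bpos _ W0 that] phi1lb[of "y + z"] q1 by simp
  have Wb: "W T y \<ge> b" if "M - 2 * \<delta>0 \<le> y \<bullet> xi + c * T" "y \<bullet> xi + c * T \<le> M" for T y
    using M_prop that unfolding W_def by blast
  define Bw where "Bw = exp (- mu * (ln (d1 * q1) / (mu1 - mu)))"
  have Wup: "W T y \<le> Bw" for T y
  proof -
    define e where "e = exp (- mu * (y \<bullet> xi + c * T))"
    define e1 where "e1 = exp (- mu1 * (y \<bullet> xi + c * T))"
    have "e * phi (y + z) \<le> e" unfolding e_def using phile[of "y + z"] by simp
    moreover have "d1 * e1 * q1 \<le> d1 * e1 * phi1 (y + z)" unfolding e1_def using phi1lb d1 by simp
    moreover have "e - (d1 * q1) * e1 \<le> Bw" unfolding e_def e1_def Bw_def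
      by (rule W_upper[OF mu]) (use d1 q1 in simp)
    ultimately show ?thesis unfolding Wdef e_def[symmetric] e1_def[symmetric] by (simp add: algebra_simps)
  qed
  have Vnn: "V s y \<ge> 0" for s y
  proof (cases "sg s y < M")
    case True
    have "b * phi0 (y + z) > 0" using bpos phi0pos by simp
    then show ?thesis unfolding Vdef using True by simp
  next
    case False
    then show ?thesis unfolding Vdef using Wnn[where T="t2 - s" and y=y] by (simp add: sg_def)
  qed
  show "uminus0 xi c M b phi0 (wfun xi c mu mu1 d1 phi phi1) z T y \<ge> 0" for T y
    using Vnn[of "t2 - T" y] by (simp add: V_def)
  have bphi0: "b * phi0 q \<le> b" for q using phi0le[of q] bpos by simp
  have Vub: "V s y \<le> max b Bw" for s y
    unfolding Vdef using bphi0[of "y + z"] Wup[of "t2 - s" y] by auto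
  have WV: "W (t2 - s) y \<le> V s y" for s y unfolding Vdef by simp
  have Vzone: "V s y = W (t2 - s) y" if "M - 2 * \<delta>0 \<le> sg s y" for s y
  proof (cases "sg s y < M")
    case True
    then have "W (t2 - s) y \<ge> b" using Wb that by (simp add: sg_def)
    then show ?thesis unfolding Vdef using True bphi0[of "y + z"] by simp
  qed (simp add: Vdef)
  have Vif: "V s y = (if sg s y \<le> M - \<delta>0 then max (b * phi0 (y + z)) (W (t2 - s) y) else W (t2 - s) y)" for s y
  proof (cases "sg s y \<le> M - \<delta>0")
    case True
    then have "sg s y < M" using d0 by simp
    then show ?thesis unfolding Vdef using True by simp
  next
    case False
    then show ?thesis using Vzone[of s y] d0 by simp
  qed
  have Wcs: "continuous_on UNIV (\<lambda>s. W (t2 - s) y)" for y unfolding Wdef by (intro continuous_intros)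
  have sgc: "continuous_on UNIV (\<lambda>s. sg s y)" for y unfolding sg_def by (intro continuous_intros)
  have Vcs: "continuous_on UNIV (\<lambda>s. V s y)" for y
  proof -
    have C: "continuous_on UNIV (\<lambda>s. if sg s y \<le> M - \<delta>0 then max (b * phi0 (y + z)) (W (t2 - s) y) else W (t2 - s) y)"
    proof (rule continuous_on_cases_le[OF _ _ sgc])
      show "continuous_on {s \<in> UNIV. sg s y \<le> M - \<delta>0} (\<lambda>s. max (b * phi0 (y + z)) (W (t2 - s) y))"
        by (intro continuous_on_max continuous_on_const continuous_on_subset[OF Wcs]) simp
      show "continuous_on {s \<in> UNIV. M - \<delta>0 \<le> sg s y} (\<lambda>s. W (t2 - s) y)"
        by (rule continuous_on_subset[OF Wcs]) simp
      fix s assume "sg s y = M - \<delta>0"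
      then have "W (t2 - s) y \<ge> b" using Wb d0 by (simp add: sg_def)
      then show "max (b * phi0 (y + z)) (W (t2 - s) y) = W (t2 - s) y" using bphi0[of "y + z"] by simp
    qed
    have EQ: "(\<lambda>s. V s y) = (\<lambda>s. if sg s y \<le> M - \<delta>0 then max (b * phi0 (y + z)) (W (t2 - s) y) else W (t2 - s) y)"
      by (rule ext) (rule Vif)
    show ?thesis unfolding EQ by (rule C)
  qed
  have phi0c': "continuous_on UNIV (\<lambda>y. phi0 (y + z))" by (rule cont_shift[OF phi0c])
  have Wcy: "continuous_on UNIV (W T)" for T unfolding Wdef
    by (intro continuous_on_diff continuous_on_mult[OF _ cont_shift[OF phic]]
          continuous_on_mult[OF _ cont_shift[OF phi1c]] continuous_intros)
  have Vmeas: "V s \<in> borel_measurable lborel" for s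
  proof -
    have eq: "V s = (\<lambda>y. if sg s y < M then max (b * phi0 (y + z)) (W (t2 - s) y) else W (t2 - s) y)"
      by (rule ext) (rule Vdef)
    have m1: "(\<lambda>y. max (b * phi0 (y + z)) (W (t2 - s) y)) \<in> borel_measurable lborel"
      using borel_measurable_continuous_onI[OF continuous_on_max[OF continuous_on_mult[OF continuous_on_const phi0c'] Wcy]]
      by simp
    have m2: "W (t2 - s) \<in> borel_measurable lborel"
      using borel_measurable_continuous_onI[OF Wcy] by simp
    have "open {y. sg s y < M}" unfolding sg_def
      by (rule open_Collect_less) (intro continuous_intros)+
    then have "{y \<in> space lborel. sg s y < M} \<in> sets lborel" by simp
    then show ?thesis unfolding eq by (rule measurable_If[OF m1 m2])
  qed
  have Vabs: "\<bar>V s y\<bar> \<le> max b Bw" for s y using Vnn[of s y] Vub[of s y] by simp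
  have iV: "integrable lborel (\<lambda>y. k (y - x) * V s y)" for s x by (rule int_bdd[OF Vmeas Vabs])
  have iW: "integrable lborel (\<lambda>y. k (y - x) * W T y)" for T x by (rule int_cont[OF Wcy])
  have V5: "b * phi0 (y + z) \<le> V t y" if sx: "sg t x \<le> M - \<delta>0" and k0: "k (y - x) \<noteq> 0" for t x y
  proof -
    have ny: "norm (y - x) < \<delta>0" using k0 ksupp by (meson not_le)
    have "(y - x) \<bullet> xi \<le> norm (y - x) * norm xi" by (rule norm_cauchy_schwarz)
    then have "(y - x) \<bullet> xi < \<delta>0" using ny xin by simp
    moreover have "sg t y = sg t x + (y - x) \<bullet> xi" unfolding sg_def by (simp add: inner_diff_left)
    ultimately have "sg t y < M" using sx by simp
    then show ?thesis unfolding Vdef by simp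
  qed
  have Wbr: "rdini (\<lambda>s. W (t2 - s) x) t (NL k f z (V t) x)" if act: "V t x = W (t2 - t) x" for t x
  proof -
    obtain D where D: "((\<lambda>s. W (t2 - s) x) has_real_derivative D) (at t)"
      "D \<le> (LINT y|lborel. k (y - x) * W (t2 - t) y) - W (t2 - t) x + f (x + z) (W (t2 - t) x) * W (t2 - t) x"
      using d1_sub unfolding W_def by blast
    have "rdini (\<lambda>s. W (t2 - s) x) t D"
      by (rule rdini_deriv[OF has_field_derivative_at_within[OF D(1)]])
    moreover have "(LINT y|lborel. k (y - x) * W (t2 - t) y) \<le> (LINT y|lborel. k (y - x) * V t y)"
    proof (rule integral_mono[OF iW iV])
      fix y show "k (y - x) * W (t2 - t) y \<le> k (y - x) * V t y"
        using WV knn by (intro mult_left_mono) auto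
    qed
    then have "D \<le> NL k f z (V t) x" using D(2) unfolding NL_def act by (simp add: mult.commute)
    ultimately show ?thesis by (rule rdini_mono)
  qed
  have bbr: "0 \<le> NL k f z (V t) x" if act: "V t x = b * phi0 (x + z)" and sx: "sg t x \<le> M - \<delta>0" for t x
  proof -
    have ib: "integrable lborel (\<lambda>y. k (y - x) * (b * phi0 (y + z)))"
      by (rule int_cont[OF continuous_on_mult[OF continuous_on_const phi0c']])
    have "(LINT y|lborel. k (y - x) * (b * phi0 (y + z))) \<le> (LINT y|lborel. k (y - x) * V t y)"
    proof (rule integral_mono[OF ib iV])
      fix y show "k (y - x) * (b * phi0 (y + z)) \<le> k (y - x) * V t y"
      proof (cases "k (y - x) = 0")
        case False
        then show ?thesis using V5[OF sx False] knn by (intro mult_left_mono) auto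
      qed simp
    qed
    moreover have "(LINT y|lborel. k (y - x) * (b * phi0 (y + z))) - b * phi0 (x + z)
                   + f (x + z) (b * phi0 (x + z)) * (b * phi0 (x + z)) \<ge> 0" using b_sub by blast
    ultimately show ?thesis unfolding NL_def act by (simp add: mult.commute)
  qed
  have rdV: "rdini (\<lambda>s. V s x) t (NL k f z (V t) x)" for t x
  proof -
    define dl where "dl = \<delta>0 / (\<bar>c\<bar> + 1)"
    have dl: "dl > 0" using d0 by (simp add: dl_def)
    have near: "\<bar>sg s x - sg t x\<bar> < \<delta>0" if "t \<le> s" "s < t + dl" for s
    proof -
      have "sg s x - sg t x = - c * (s - t)" unfolding sg_def by (simp add: algebra_simps)
      then have "\<bar>sg s x - sg t x\<bar> = \<bar>c\<bar> * (s - t)" using that by (simp add: abs_mult)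
      also have "\<dots> \<le> \<bar>c\<bar> * dl" using that by (intro mult_left_mono) auto
      also have "\<dots> < \<delta>0" unfolding dl_def using d0
        by (simp add: field_simps)
      finally show ?thesis .
    qed
    show ?thesis
    proof (cases "sg t x > M - \<delta>0")
      case True
      have act: "V t x = W (t2 - t) x" using Vzone[of t x] True d0 by simp
      show ?thesis
      proof (rule rdini_cong[OF Wbr[OF act] dl])
        fix s assume a: "t \<le> s" "s < t + dl"
        have "\<bar>sg s x - sg t x\<bar> < \<delta>0" by (rule near[OF a])
        then have "M - 2 * \<delta>0 \<le> sg s x" using True by (simp add: abs_less_iff)
        then show "V s x = W (t2 - s) x" by (rule Vzone)
      qed
    next
      case False
      then have sx: "sg t x \<le> M - \<delta>0" by simp
      have "rdini (\<lambda>s. max ((\<lambda>s. b * phi0 (x + z)) s) ((\<lambda>s. W (t2 - s) x) s)) t (NL k f z (V t) x)"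
      proof (rule rdini_max)
        assume "(\<lambda>s. W (t2 - s) x) t \<le> (\<lambda>s. b * phi0 (x + z)) t"
        then have "V t x = b * phi0 (x + z)" unfolding Vdef using sx d0 by simp
        then show "rdini (\<lambda>s. b * phi0 (x + z)) t (NL k f z (V t) x)"
          by (intro rdini_const bbr sx)
      next
        assume "(\<lambda>s. b * phi0 (x + z)) t \<le> (\<lambda>s. W (t2 - s) x) t"
        then have "V t x = W (t2 - t) x" unfolding Vdef using sx d0 by simp
        then show "rdini (\<lambda>s. W (t2 - s) x) t (NL k f z (V t) x)" by (rule Wbr)
      next
        show "isCont (\<lambda>s. b * phi0 (x + z)) t" by (rule continuous_const)
        show "isCont (\<lambda>s. W (t2 - s) x) t"
          using Wcs[of x] continuous_on_eq_continuous_at[OF open_UNIV] by blast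
      qed
      then show ?thesis
      proof (rule rdini_cong[OF _ dl])
        fix s assume a: "t \<le> s" "s < t + dl"
        have "\<bar>sg s x - sg t x\<bar> < \<delta>0" by (rule near[OF a])
        then have "sg s x < M" using sx by (simp add: abs_less_iff)
        then show "V s x = max (b * phi0 (x + z)) (W (t2 - s) x)" unfolding Vdef by simp
      qed
    qed
  qed
  show "uminus0 xi c M b phi0 (wfun xi c mu mu1 d1 phi phi1) z (t2 - s) x \<le> u2 s x"
    if sol: "is_solution k f z (uminus0 xi c M b phi0 (wfun xi c mu mu1 d1 phi phi1) z t2) u2" and s: "s \<ge> 0"
    for u2 s x
  proof -
    have u2nn: "u2 t x \<ge> 0" if "t \<ge> 0" for t x
      by (rule sol_nonneg[OF sol _ that]) (use Vnn[where s=0] in \<open>simp add: V_def\<close>)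
    have "V s x \<le> u2 s x"
    proof (rule compare_pde[where z=z and v=V and u=u2])
      show "V 0 x \<le> u2 0 x" for x using sol_init[OF sol] by (simp add: V_def)
      show "\<exists>B. \<forall>t\<in>{0..T}. \<forall>x. \<bar>V t x\<bar> \<le> B \<and> \<bar>u2 t x\<bar> \<le> B" if T: "T \<ge> 0" for T
      proof -
        obtain B where B: "\<forall>t\<in>{0..T}. \<forall>x. \<bar>u2 t x\<bar> \<le> B" using sol_bnd[OF sol T] by blast
        show ?thesis
        proof (intro exI[of _ "max B (max b Bw)"] ballI allI conjI)
          fix t x assume "t \<in> {0..T}"
          then have "\<bar>u2 t x\<bar> \<le> B" using B by blast
          then show "\<bar>u2 t x\<bar> \<le> max B (max b Bw)" by simp
          show "\<bar>V t x\<bar> \<le> max B (max b Bw)" using Vabs[of t x] by simp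
        qed
      qed
      show "V t \<in> borel_measurable lborel" for t by (rule Vmeas)
      show "u2 t \<in> borel_measurable lborel" if "t \<ge> 0" for t by (rule sol_meas[OF sol that])
      show "continuous_on {0..} (\<lambda>s. V s x - u2 s x)" for x
        by (intro continuous_on_diff sol_cont[OF sol] continuous_on_subset[OF Vcs]) simp
      show "0 \<le> u2 t x \<or> V t x \<le> 0" if "t \<ge> 0" for t x using u2nn[OF that] by simp
      show "rdini (\<lambda>s. V s x - u2 s x) t (NL k f z (V t) x - NL k f z (u2 t) x)" if t: "t \<ge> 0" for t x
      proof -
        have "((\<lambda>s. - u2 s x) has_real_derivative - NL k f z (u2 t) x) (at t within {t..})"
          by (rule DERIV_minus[OF sol_der[OF sol t]])
        then have "rdini (\<lambda>s. V s x + - u2 s x) t (NL k f z (V t) x + - NL k f z (u2 t) x)"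
          by (intro rdini_add[OF rdV] rdini_deriv)
        then show ?thesis by simp
      qed
    qed (rule s)
    then show ?thesis by (simp add: V_def)
  qed
qed

end

context kf
begin

lemma compare_sols:
  assumes solv: "is_solution k f z a v" and solu: "is_solution k f z b u"
    and ab: "\<And>x. a x \<le> b x" and unn: "\<And>t x. t \<ge> 0 \<Longrightarrow> u t x \<ge> 0" and t: "t \<ge> 0"
  shows "v t x \<le> u t x"
proof (rule compare_pde[where z=z and v=v and u=u])
  show "v 0 x \<le> u 0 x" for x using sol_init[OF solv] sol_init[OF solu] ab by simp
  show "\<exists>B. \<forall>t\<in>{0..T}. \<forall>x. \<bar>v t x\<bar> \<le> B \<and> \<bar>u t x\<bar> \<le> B" if T: "T \<ge> 0" for T
  proof -
    obtain B1 where B1: "\<forall>t\<in>{0..T}. \<forall>x. \<bar>v t x\<bar> \<le> B1" using sol_bnd[OF solv T] by blast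
    obtain B2 where B2: "\<forall>t\<in>{0..T}. \<forall>x. \<bar>u t x\<bar> \<le> B2" using sol_bnd[OF solu T] by blast
    show ?thesis
    proof (intro exI[of _ "max B1 B2"] ballI allI conjI)
      fix t x assume tt: "t \<in> {0..T}"
      then have "\<bar>v t x\<bar> \<le> B1" using B1 by blast
      then show "\<bar>v t x\<bar> \<le> max B1 B2" by simp
      have "\<bar>u t x\<bar> \<le> B2" using B2 tt by blast
      then show "\<bar>u t x\<bar> \<le> max B1 B2" by simp
    qed
  qed
  show "v t \<in> borel_measurable lborel" if "t \<ge> 0" for t by (rule sol_meas[OF solv that])
  show "u t \<in> borel_measurable lborel" if "t \<ge> 0" for t by (rule sol_meas[OF solu that])
  show "continuous_on {0..} (\<lambda>s. v s x - u s x)" for x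
    by (intro continuous_on_diff sol_cont[OF solv] sol_cont[OF solu])
  show "0 \<le> u t x \<or> v t x \<le> 0" if "t \<ge> 0" for t x using unn[OF that] by simp
  show "rdini (\<lambda>s. v s x - u s x) t (NL k f z (v t) x - NL k f z (u t) x)" if tt: "t \<ge> 0" for t x
  proof -
    have "rdini (\<lambda>s. v s x + - u s x) t (NL k f z (v t) x + - NL k f z (u t) x)"
      by (intro rdini_add rdini_deriv sol_der[OF solv tt] DERIV_minus sol_der[OF solu tt])
    then show ?thesis by simp
  qed
qed (rule t)

end

theorem proposition3p6:
  fixes k :: "real^'n::finite \<Rightarrow> real"
    and f :: "real^'n \<Rightarrow> real \<Rightarrow> real"
    and p :: "'n \<Rightarrow> real"
    and delta0 :: real
    and xi :: "real^'n"
    and c mu mu1 mu_star cstar d1 b M d2 :: real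
    and phi phi1 phi0 uplus :: "real^'n \<Rightarrow> real"
  assumes p_pos: "\<forall>i. p i > 0"
    and k_C1: "\<exists>D :: real^'n \<Rightarrow> ((real^'n) \<Rightarrow>\<^sub>L real).
                 (\<forall>x. (k has_derivative blinfun_apply (D x)) (at x)) \<and> continuous_on UNIV D"
    and delta0_pos: "delta0 > 0"
    and k_pos: "\<forall>z. norm z < delta0 \<longrightarrow> k z > 0"
    and k_zero: "\<forall>z. norm z \<ge> delta0 \<longrightarrow> k z = 0"
    and k_int: "(LINT z|lborel. k z) = 1"
    and f_per: "\<forall>x u i. f (x + p i *\<^sub>R axis i 1) u = f x u"
    and H1_C1: "\<exists>D :: ((real^'n) \<times> real) \<Rightarrow> (((real^'n) \<times> real) \<Rightarrow>\<^sub>L real).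
                 (\<forall>q \<in> UNIV \<times> {0..}. ((\<lambda>(x, u). f x u) has_derivative blinfun_apply (D q))
                     (at q within UNIV \<times> {0..})) \<and> continuous_on (UNIV \<times> {0..}) D"
    and H1_mono: "\<exists>\<epsilon>>0. \<forall>x u D. u \<ge> 0 \<longrightarrow>
                   ((\<lambda>v. f x v) has_real_derivative D) (at u within {0..}) \<longrightarrow> D \<le> - \<epsilon>"
    and H1_neg: "\<exists>U. \<forall>x u. u \<ge> U \<longrightarrow> f x u < 0"
    and H2: "lambda0 p k xi 0 (\<lambda>x. f x 0) > 0"
    and H3: "\<forall>xi'. norm xi' = 1 \<longrightarrow> (\<forall>m\<ge>0.
               principal_eigenvalue p (Lop k xi' m (\<lambda>x. f x 0)) (lambda0 p k xi' m (\<lambda>x. f x 0)))"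
    and H4: "\<forall>x u. u \<le> 0 \<longrightarrow> f x u = f x 0"
    and uplus_Xp: "uplus \<in> Xp_real p"
    and uplus_nonneg: "\<forall>x. uplus x \<ge> 0"
    and uplus_nonzero: "\<exists>x. uplus x \<noteq> 0"
    and uplus_stat: "\<forall>x. (LINT y|lborel. k (y - x) * uplus y) - uplus x + uplus x * f x (uplus x) = 0"
    and xi_unit: "norm xi = 1"
    and mu_star_pos: "mu_star > 0"
    and cstar_def: "cstar = Inf {lambda0 p k xi m (\<lambda>x. f x 0) / m | m. m > 0}"
    and cstar_attained: "cstar = lambda0 p k xi mu_star (\<lambda>x. f x 0) / mu_star"
    and cstar_strict: "\<forall>m. 0 < m \<and> m < mu_star \<longrightarrow> cstar < lambda0 p k xi m (\<lambda>x. f x 0) / m"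
    and c_gt: "c > cstar"
    and mu_range: "0 < mu" "mu < mu_star"
    and mu_eq: "lambda0 p k xi mu (\<lambda>x. f x 0) = c * mu"
    and mu1_range: "mu < mu1" "mu1 < min (2 * mu) mu_star"
    and mu1_speed: "cstar < lambda0 p k xi mu1 (\<lambda>x. f x 0) / mu1"
                   "lambda0 p k xi mu1 (\<lambda>x. f x 0) / mu1 < c"
    and phi_Xp: "phi \<in> Xp_real p" and phi_pos: "\<forall>x. phi x > 0" and phi_sup: "(SUP x. phi x) = 1"
    and phi_eig: "Lop k xi mu (\<lambda>x. f x 0) (\<lambda>x. complex_of_real (phi x))
                  = (\<lambda>x. complex_of_real (lambda0 p k xi mu (\<lambda>x. f x 0)) * complex_of_real (phi x))"
    and phi1_Xp: "phi1 \<in> Xp_real p" and phi1_pos: "\<forall>x. phi1 x > 0" and phi1_sup: "(SUP x. phi1 x) = 1"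
    and phi1_eig: "Lop k xi mu1 (\<lambda>x. f x 0) (\<lambda>x. complex_of_real (phi1 x))
                  = (\<lambda>x. complex_of_real (lambda0 p k xi mu1 (\<lambda>x. f x 0)) * complex_of_real (phi1 x))"
    and phi0_Xp: "phi0 \<in> Xp_real p" and phi0_pos: "\<forall>x. phi0 x > 0" and phi0_sup: "(SUP x. phi0 x) = 1"
    and phi0_eig: "Lop k xi 0 (\<lambda>x. f x 0) (\<lambda>x. complex_of_real (phi0 x))
                  = (\<lambda>x. complex_of_real (lambda0 p k xi 0 (\<lambda>x. f x 0)) * complex_of_real (phi0 x))"
    and d1_pos: "d1 > 0"
    and d1_sub: "\<forall>z T t x. \<exists>D.
        ((\<lambda>s. wfun xi c mu mu1 d1 phi phi1 z (T - s) x) has_real_derivative D) (at t) \<and>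
        D \<le> (LINT y|lborel. k (y - x) * wfun xi c mu mu1 d1 phi phi1 z (T - t) y)
             - wfun xi c mu mu1 d1 phi phi1 z (T - t) x
             + f (x + z) (wfun xi c mu mu1 d1 phi phi1 z (T - t) x)
               * wfun xi c mu mu1 d1 phi phi1 z (T - t) x"
    and b_pos: "b > 0"
    and b_sub: "\<forall>x z. (LINT y|lborel. k (y - x) * (b * phi0 (y + z))) - b * phi0 (x + z)
                   + f (x + z) (b * phi0 (x + z)) * (b * phi0 (x + z)) \<ge> 0"
    and M_pos: "M > 0"
    and M_prop: "\<forall>z T x. M - 2 * delta0 \<le> x \<bullet> xi + c * T \<and> x \<bullet> xi + c * T \<le> M
                   \<longrightarrow> wfun xi c mu mu1 d1 phi phi1 z T x \<ge> b"
    and d2_nonneg: "d2 \<ge> 0"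
  shows "\<forall>z t1 t2. 0 < t1 \<and> t1 < t2 \<longrightarrow>
     (\<forall>u1 u2. is_solution k f z (uminus0 xi c M b phi0 (wfun xi c mu mu1 d1 phi phi1) z t2) u2 \<and>
              is_solution k f z (uminus0 xi c M b phi0 (wfun xi c mu mu1 d1 phi phi1) z t1) u1 \<longrightarrow>
         (\<forall>t x. t > - t1 \<longrightarrow> u2 (t2 + t) x \<ge> u1 (t1 + t) x)) \<and>
     (\<forall>u1 u2. is_solution k f z (uplus0 xi c mu mu1 d2 phi phi1 uplus z t2) u2 \<and>
              is_solution k f z (uplus0 xi c mu mu1 d2 phi phi1 uplus z t1) u1 \<longrightarrow>
         (\<forall>t x. t > - t1 \<longrightarrow> u2 (t2 + t) x \<le> u1 (t1 + t) x))"
proof -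
  define a0 where "a0 = (\<lambda>x. f x 0)"
  define \<Lambda> where "\<Lambda> = lambda0 p k xi 0 a0 + 1"
  have kcont: "continuous_on UNIV k"
  proof -
    obtain D :: "real^'n \<Rightarrow> ((real^'n) \<Rightarrow>\<^sub>L real)" where D: "\<forall>x. (k has_derivative blinfun_apply (D x)) (at x)"
      using k_C1 by blast
    have "isCont k x" for x using has_derivative_continuous D by blast
    then show ?thesis by (simp add: continuous_at_imp_continuous_on)
  qed
  have knn: "k y \<ge> 0" for y
  proof (cases "norm y < delta0")
    case True then show ?thesis using k_pos less_imp_le by blast
  next
    case False then show ?thesis using k_zero by simp
  qed
  have fm: "f x b' \<le> f x a'" if "0 \<le> a'" "a' \<le> b'" for x a' b'
    by (rule f_mono[OF H1_C1 H1_mono that])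
  have f0: "f x 0 \<le> \<Lambda>" for x
  proof -
    have e: "(LINT y|lborel. exp (- 0 * ((y - x) \<bullet> xi)) * k (y - x) * phi0 y) - phi0 x + a0 x * phi0 x
        = lambda0 p k xi 0 a0 * phi0 x"
      by (rule eig_real) (use phi0_eig in \<open>simp add: a0_def\<close>)
    have "(LINT y|lborel. exp (- 0 * ((y - x) \<bullet> xi)) * k (y - x) * phi0 y) \<ge> 0"
      using knn phi0_pos by (intro integral_nonneg_AE AE_I2) (simp add: less_imp_le)
    then have "a0 x * phi0 x \<le> \<Lambda> * phi0 x" using e unfolding \<Lambda>_def by (simp add: algebra_simps)
    then show ?thesis using phi0_pos[rule_format, of x] unfolding a0_def by simp
  qed
  have Lam: "f x w \<le> \<Lambda>" for x w
  proof (cases "w \<ge> 0")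
    case True then show ?thesis using fm[of 0 w x] f0[of x] by simp
  next
    case False
    then have "f x w = f x 0" using H4 by (meson not_le less_imp_le)
    then show ?thesis using f0[of x] by simp
  qed
  interpret kf k f delta0 \<Lambda>
  proof
    show "continuous_on UNIV k" by (rule kcont)
    show "0 \<le> k y" for y by (rule knn)
    show "delta0 \<le> norm y \<Longrightarrow> k y = 0" for y using k_zero by simp
    show "(LINT y|lborel. k y) = 1" by (rule k_int)
    show "f x w \<le> \<Lambda>" for x w by (rule Lam)
    show "0 \<le> a' \<Longrightarrow> a' \<le> b' \<Longrightarrow> f x b' \<le> f x a'" for x a' b' by (rule fm)
    show "w \<le> 0 \<Longrightarrow> f x w = f x 0" for x w using H4 by blast
  qed
  have phic: "continuous_on UNIV phi" using phi_Xp by (simp add: Xp_real_def)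
  have phi1c: "continuous_on UNIV phi1" using phi1_Xp by (simp add: Xp_real_def)
  have phi0c: "continuous_on UNIV phi0" using phi0_Xp by (simp add: Xp_real_def)
  have upc: "continuous_on UNIV uplus" using uplus_Xp by (simp add: Xp_real_def)
  have phile: "phi x \<le> 1" for x by (rule per_le_sup[OF phi_Xp p_pos phi_sup])
  have phi0le: "phi0 x \<le> 1" for x by (rule per_le_sup[OF phi0_Xp p_pos phi0_sup])
  obtain x1 where x1: "\<forall>x. phi1 x1 \<le> phi1 x" using per_min[OF phi1_Xp p_pos] by blast
  obtain Ub where Ub: "\<forall>x. \<bar>uplus x\<bar> \<le> Ub" using per_bounded[OF uplus_Xp p_pos] by blast
  have mu1pos: "mu1 > 0" using mu_range mu1_range by simp
  have phieig: "(LINT y|lborel. exp (- mu * ((y - x) \<bullet> xi)) * k (y - x) * phi y) - phi x + f x 0 * phi x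
                 = (c * mu) * phi x" for x
    using eig_real[OF phi_eig, of x] mu_eq by simp
  have phi1eig: "(LINT y|lborel. exp (- mu1 * ((y - x) \<bullet> xi)) * k (y - x) * phi1 y) - phi1 x + f x 0 * phi1 x
                 = lambda0 p k xi mu1 (\<lambda>x. f x 0) * phi1 x" for x
    using eig_real[OF phi1_eig, of x] by simp
  have L1: "lambda0 p k xi mu1 (\<lambda>x. f x 0) \<le> c * mu1"
    using mu1_speed(2) mu1pos by (simp add: divide_less_eq less_imp_le)
  show ?thesis
  proof (intro allI impI, rule conjI)
    fix z :: "real^'n" and t1 t2 :: real
    assume tt: "0 < t1 \<and> t1 < t2"
    define a where "a = t2 - t1"
    have apos: "a > 0" using tt by (simp add: a_def)
    note subn = sub_nonneg[where z=z, OF delta0_pos xi_unit mu_range(1) mu1_range(1) d1_pos b_pos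
        phic phile phi1c x1[rule_format] phi1_pos[rule_format] phi0c phi0_pos[rule_format] phi0le
        d1_sub b_sub M_prop]
    note subl = sub_le[where z=z and ?t2.0=t2, OF delta0_pos xi_unit mu_range(1) mu1_range(1) d1_pos b_pos
        phic phile phi1c x1[rule_format] phi1_pos[rule_format] phi0c phi0_pos[rule_format] phi0le
        d1_sub b_sub M_prop]
    show "\<forall>u1 u2. is_solution k f z (uminus0 xi c M b phi0 (wfun xi c mu mu1 d1 phi phi1) z t2) u2 \<and>
              is_solution k f z (uminus0 xi c M b phi0 (wfun xi c mu mu1 d1 phi phi1) z t1) u1 \<longrightarrow>
         (\<forall>t x. t > - t1 \<longrightarrow> u2 (t2 + t) x \<ge> u1 (t1 + t) x)"
    proof (intro allI impI)
      fix u1 u2 t x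
      assume H: "is_solution k f z (uminus0 xi c M b phi0 (wfun xi c mu mu1 d1 phi phi1) z t2) u2 \<and>
              is_solution k f z (uminus0 xi c M b phi0 (wfun xi c mu mu1 d1 phi phi1) z t1) u1"
        and t: "t > - t1"
      have sol2: "is_solution k f z (uminus0 xi c M b phi0 (wfun xi c mu mu1 d1 phi phi1) z t2) u2" using H by blast
      have sol1: "is_solution k f z (uminus0 xi c M b phi0 (wfun xi c mu mu1 d1 phi phi1) z t1) u1" using H by blast
      have solU: "is_solution k f z (u2 a) (\<lambda>s. u2 (s + a))" by (rule sol_shift[OF sol2 apos])
      have u2nn: "u2 s y \<ge> 0" if "s \<ge> 0" for s y
        by (rule sol_nonneg[OF sol2 subn that])
      have init: "uminus0 xi c M b phi0 (wfun xi c mu mu1 d1 phi phi1) z t1 y \<le> u2 a y" for y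
        using subl[OF sol2, of a y] apos by (simp add: a_def)
      have "u1 (t1 + t) x \<le> (\<lambda>s. u2 (s + a)) (t1 + t) x"
      proof (rule compare_sols[OF sol1 solU init])
        show "0 \<le> u2 (s + a) y" if "s \<ge> 0" for s y using u2nn that apos by simp
        show "0 \<le> t1 + t" using t by simp
      qed
      moreover have "t1 + t + a = t2 + t" by (simp add: a_def)
      ultimately show "u1 (t1 + t) x \<le> u2 (t2 + t) x" by simp
    qed
    show "\<forall>u1 u2. is_solution k f z (uplus0 xi c mu mu1 d2 phi phi1 uplus z t2) u2 \<and>
              is_solution k f z (uplus0 xi c mu mu1 d2 phi phi1 uplus z t1) u1 \<longrightarrow>
         (\<forall>t x. t > - t1 \<longrightarrow> u2 (t2 + t) x \<le> u1 (t1 + t) x)"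
    proof (intro allI impI)
      fix u1 u2 t x
      assume H: "is_solution k f z (uplus0 xi c mu mu1 d2 phi phi1 uplus z t2) u2 \<and>
              is_solution k f z (uplus0 xi c mu mu1 d2 phi phi1 uplus z t1) u1"
        and t: "t > - t1"
      have sol2: "is_solution k f z (uplus0 xi c mu mu1 d2 phi phi1 uplus z t2) u2" using H by blast
      have sol1: "is_solution k f z (uplus0 xi c mu mu1 d2 phi phi1 uplus z t1) u1" using H by blast
      have solU: "is_solution k f z (u2 a) (\<lambda>s. u2 (s + a))" by (rule sol_shift[OF sol2 apos])
      have upnn: "uplus0 xi c mu mu1 d2 phi phi1 uplus z T y \<ge> 0" for T y
        unfolding uplus0_def using phi_pos phi1_pos uplus_nonneg d2_nonneg
        by (intro min.boundedI add_nonneg_nonneg mult_nonneg_nonneg) (auto simp: less_imp_le)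
      have u1nn: "u1 s y \<ge> 0" if "s \<ge> 0" for s y
        by (rule sol_nonneg[OF sol1 upnn that])
      have init: "u2 a y \<le> uplus0 xi c mu mu1 d2 phi phi1 uplus z t1 y" for y
      proof -
        have "u2 a y \<le> uplus0 xi c mu mu1 d2 phi phi1 uplus z (t2 - a) y"
        proof (rule super_step[OF phic _ phieig phi1c _ phi1eig L1 upc])
          show "0 \<le> phi x" for x using phi_pos less_imp_le by blast
          show "0 \<le> phi1 x" for x using phi1_pos less_imp_le by blast
          show "0 \<le> uplus x" for x using uplus_nonneg by blast
          show "uplus x \<le> Ub" for x using Ub abs_le_D1 by blast
          show "(LINT y|lborel. k (y - x) * uplus y) - uplus x + uplus x * f x (uplus x) = 0" for x
            using uplus_stat by blast
          show "0 \<le> d2" by (rule d2_nonneg)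
          show "is_solution k f z (uplus0 xi c mu mu1 d2 phi phi1 uplus z t2) u2" by (rule sol2)
          show "0 \<le> a" using apos by simp
        qed
        then show ?thesis by (simp add: a_def)
      qed
      have "(\<lambda>s. u2 (s + a)) (t1 + t) x \<le> u1 (t1 + t) x"
      proof (rule compare_sols[OF solU sol1 init])
        show "0 \<le> u1 s y" if "s \<ge> 0" for s y using u1nn that by simp
        show "0 \<le> t1 + t" using t by simp
      qed
      moreover have "t1 + t + a = t2 + t" by (simp add: a_def)
      ultimately show "u2 (t2 + t) x \<le> u1 (t1 + t) x" by simp
    qed
  qed
qed

end
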